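(* For each integer $N\ge2$ there exists a Lipschitz map $f:[0,1]\to\mathbb{R}^N$ with $f(0)=\mathbf{0}$ such that $\mathrm{Tan}(f([0,1]),\mathbf{0})=\mathfrak{C}_U(\mathbb{R}^N;\mathbf{0})$.
   Context: $\mathfrak{C}_U(\mathbb{R}^N;\mathbf{0})$ denotes the collection of all closed sets $X\subset\mathbb{R}^N$ with $\mathbf{0}\in X$ such that every connected component of $X$ is unbounded. With $\mathrm{exc}(A,B)=\sup_{a\in A}\inf_{b\in B}|a-b|$, closed sets $X_m\to X$ (Attouch–Wets) iff for every $r>0$, $\mathrm{exc}(X_m\cap\overline{B}(\mathbf{0},r),X)\to0$ and $\mathrm{exc}(X\cap\overline{B}(\mathbf{0},r),X_m)\to0$; a closed $T\ni\mathbf{0}$ belongs to $\mathrm{Tan}(X,x)$ if $r_j^{-1}(X-x)\to T$ for some $r_j\downarrow0$. *)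

theory Defs
  imports "HOL-Analysis.Analysis"
begin

text \<open>Excess of A over B: sup over a in A of inf over b in B of |a - b|,
  valued in [0,\<infinity>] (sup of empty set = 0, inf of empty set = \<infinity>).\<close>
definition exc :: "'a::metric_space set \<Rightarrow> 'a set \<Rightarrow> ennreal" where
  "exc A B = (SUP a\<in>A. INF b\<in>B. ennreal (dist a b))"

definition AW_converges :: "(nat \<Rightarrow> 'a::real_normed_vector set) \<Rightarrow> 'a set \<Rightarrow> bool" where
  "AW_converges Xs X \<longleftrightarrow>
     (\<forall>r>0. ((\<lambda>m. exc (Xs m \<inter> cball 0 r) X) \<longlongrightarrow> 0) sequentially \<and>
            ((\<lambda>m. exc (X \<inter> cball 0 r) (Xs m)) \<longlongrightarrow> 0) sequentially)"

definition Tan :: "'a::real_normed_vector set \<Rightarrow> 'a \<Rightarrow> 'a set set" where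
  "Tan X x = {T. closed T \<and> 0 \<in> T \<and>
     (\<exists>r::nat \<Rightarrow> real. (\<forall>j. r j > 0) \<and> decseq r \<and> r \<longlonglongrightarrow> 0 \<and>
        AW_converges (\<lambda>j. (\<lambda>y. (1 / r j) *\<^sub>R (y - x)) ` X) T)}"

definition CU :: "'a::real_normed_vector set set" where
  "CU = {X. closed X \<and> 0 \<in> X \<and> (\<forall>C\<in>components X. \<not> bounded C)}"

end

theory Submission
  imports Defs
begin

lemma exc_le:
  assumes "\<And>a. a\<in>A \<Longrightarrow> \<exists>b\<in>B. dist a b \<le> e" "e \<ge> 0"
  shows "exc A B \<le> ennreal e"
  unfolding exc_def
proof (rule SUP_least)
  fix a assume "a \<in> A"
  then obtain b where "b \<in> B" "dist a b \<le> e" using assms by blast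
  then show "(INF b\<in>B. ennreal (dist a b)) \<le> ennreal e"
    by (meson INF_lower2 ennreal_leI)
qed

lemma exc_lt:
  assumes "exc A B < ennreal e" "a \<in> A"
  shows "\<exists>b\<in>B. dist a b < e"
proof -
  have "(INF b\<in>B. ennreal (dist a b)) \<le> exc A B"
    unfolding exc_def using assms(2) by (rule SUP_upper)
  then have "(INF b\<in>B. ennreal (dist a b)) < ennreal e" using assms(1) by order
  then obtain b where "b \<in> B" "ennreal (dist a b) < ennreal e"
    by (meson INF_less_iff)
  then show ?thesis
    by (metis ennreal_less_iff linorder_not_le order_less_le_trans zero_le_dist ennreal_le_iff)
qed

lemma tendsto_exc_0:
  assumes "\<And>\<epsilon>. \<epsilon> > 0 \<Longrightarrow> eventually (\<lambda>m. \<forall>a\<in>A m. \<exists>b\<in>B m. dist a b \<le> \<epsilon>) sequentially"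
  shows "((\<lambda>m. exc (A m) (B m)) \<longlongrightarrow> 0) sequentially"
proof (rule order_tendstoI)
  fix y :: ennreal assume "y < 0" then show "eventually (\<lambda>m. y < exc (A m) (B m)) sequentially"
    by simp
next
  fix y :: ennreal assume "0 < y"
  then obtain \<epsilon> where e: "\<epsilon> > 0" "ennreal \<epsilon> < y"
  proof (cases "y = top")
    case True then show ?thesis using that[of 1] by simp
  next
    case False
    then have "enn2real y > 0" using \<open>0 < y\<close> by (simp add: enn2real_positive_iff less_top)
    moreover have "ennreal (enn2real y / 2) < ennreal (enn2real y)"
      using calculation by (subst ennreal_less_iff) auto
    moreover have "ennreal (enn2real y) = y" using False by (simp add: less_top)
    ultimately show ?thesis by (intro that[of "enn2real y / 2"]) auto
  qed
  show "eventually (\<lambda>m. exc (A m) (B m) < y) sequentially"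
    using assms[OF e(1)] proof eventually_elim
    case (elim m)
    then have "exc (A m) (B m) \<le> ennreal \<epsilon>" using e by (intro exc_le) auto
    then show ?case using e by order
  qed
qed

lemma tendsto_exc_D:
  assumes "((\<lambda>m. exc (A m) (B m)) \<longlongrightarrow> 0) sequentially" "\<epsilon> > 0"
  shows "eventually (\<lambda>m. \<forall>a\<in>A m. \<exists>b\<in>B m. dist a b < \<epsilon>) sequentially"
proof -
  have "eventually (\<lambda>m. exc (A m) (B m) < ennreal \<epsilon>) sequentially"
    using assms by (intro order_tendstoD(2)) auto
  then show ?thesis by eventually_elim (use exc_lt in blast)
qed


lemma tan_sub_CU:
  fixes X :: "'a::euclidean_space set"
  assumes conX: "connected X" and q: "q \<in> X" "q \<noteq> 0"
  shows "Tan X 0 \<subseteq> CU"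
proof
  fix T assume "T \<in> Tan X 0"
  then obtain r where T: "closed T" "0 \<in> T" and rpos: "\<And>j. r j > 0" and r0: "r \<longlonglongrightarrow> 0"
    and AW: "AW_converges (\<lambda>j. (\<lambda>y. (1 / r j) *\<^sub>R (y - 0)) ` X) T"
    unfolding Tan_def by blast
  define Y where "Y j = (\<lambda>y. (1 / r j) *\<^sub>R y) ` X" for j
  have AW': "AW_converges Y T" using AW unfolding Y_def by simp
  have "\<not> bounded C" if C: "C \<in> components T" for C
  proof
    assume "bounded C"
    then obtain R0 where R0: "R0 > 0" "C \<subseteq> ball 0 R0" using bounded_subset_ballD by blast
    define K where "K = T \<inter> cball 0 (R0+1)"
    have "compact K" unfolding K_def using T by (simp add: closed_Int_compact)
    have CK: "C \<subseteq> K" unfolding K_def using R0 in_components_subset[OF C] by auto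
    have CcK: "C \<in> components K" 
      by (rule components_intermediate_subset[OF C CK]) (auto simp: K_def)
    have "compact C" using compact_components[OF \<open>compact K\<close> CcK] .
    obtain V where V: "openin (top_of_set K) V" "compact V" "C \<subseteq> V" "V \<subseteq> ball 0 R0"
      using Sura_Bura_clopen_subset[OF _ CcK \<open>compact C\<close> _ R0(2)]
        closed_imp_locally_compact[OF compact_imp_closed[OF \<open>compact K\<close>]] by auto
    have "closedin (top_of_set K) (K - V)"
      using V(1) by (intro closedin_diff) auto
    then have "closed (K - V)" using \<open>compact K\<close> closedin_closed_trans compact_imp_closed by blast
    moreover have "T - V = (T - ball 0 R0) \<union> (K - V)"
      using V(4) unfolding K_def by auto
    ultimately have clTV: "closed (T - V)" using T(1) by (auto intro!: closed_Un closed_Diff)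
    obtain \<delta> where \<delta>: "\<delta> > 0" "\<And>x y. x \<in> V \<Longrightarrow> y \<in> T - V \<Longrightarrow> \<delta> \<le> dist x y"
      using separate_compact_closed[OF V(2) clTV] by blast
    obtain p where p: "p \<in> C" using in_components_nonempty[OF C] by blast
    have pT: "p \<in> T" using p in_components_subset[OF C] by auto
    have pV: "p \<in> V" "norm p < R0" using p V R0 by auto
    have Vne: "V \<noteq> {}" using pV by auto
    define R1 where "R1 = R0 + 1 + \<delta>"
    have R1: "R1 > 0" using R0 \<delta> by (simp add: R1_def)
    have E1: "eventually (\<lambda>j. \<forall>a\<in>T \<inter> cball 0 R1. \<exists>b\<in>Y j. dist a b < \<delta>/4) sequentially"
      using AW' R1 \<delta> unfolding AW_converges_def by (intro tendsto_exc_D) auto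
    have E2: "eventually (\<lambda>j. \<forall>a\<in>Y j \<inter> cball 0 R1. \<exists>b\<in>T. dist a b < \<delta>/4) sequentially"
      using AW' R1 \<delta> unfolding AW_converges_def by (intro tendsto_exc_D) auto
    have E3: "eventually (\<lambda>j. r j < norm q / R1) sequentially"
      using r0 q R1 by (intro order_tendstoD(2)) auto
    have "eventually (\<lambda>j. False) sequentially"
      using E1 E2 E3 proof eventually_elim
      case (elim j)
      have conY: "connected (Y j)" unfolding Y_def
        by (intro connected_continuous_image[OF _ conX] continuous_intros)
      define g where "g y = infdist y V" for y
      have cong: "connected (g ` Y j)" unfolding g_def
        by (intro connected_continuous_image[OF _ conY] continuous_intros)
      obtain y0 where y0: "y0 \<in> Y j" "dist p y0 < \<delta>/4"
      proof -
        have "p \<in> T \<inter> cball 0 R1" using pT pV \<delta> by (auto simp: R1_def)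
        then show ?thesis using elim(1) that by blast
      qed
      have gy0: "g y0 < \<delta>/2"
        using infdist_le[OF pV(1), of y0] y0 \<delta> by (simp add: g_def dist_commute)
      define q' where "q' = (1 / r j) *\<^sub>R q"
      have q'Y: "q' \<in> Y j" using q unfolding Y_def q'_def by auto
      have "norm q' = norm q / r j" using rpos[of j] by (simp add: q'_def)
      also have "\<dots> > R1" using elim(3) rpos[of j] R1 by (simp add: field_simps)
      finally have nq': "norm q' > R1" .
      obtain v where v: "v \<in> V" "infdist q' V = dist q' v"
        using infdist_attains_inf[OF compact_imp_closed[OF V(2)] Vne] by blast
      have "norm v < R0" using v V by auto
      moreover have "norm q' - norm v \<le> dist q' v" by (simp add: dist_norm norm_triangle_ineq2)
      ultimately have "dist q' v > \<delta>/2" using nq' \<delta> unfolding R1_def by linarith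
      then have gq': "g q' > \<delta>/2" using v by (simp add: g_def)
      have "\<delta>/2 \<in> g ` Y j"
        using cong gy0 gq' y0(1) q'Y unfolding connected_iff_interval
        by (meson imageI less_imp_le)
      then obtain y where y: "y \<in> Y j" "g y = \<delta>/2" by auto
      obtain w where w: "w \<in> V" "infdist y V = dist y w"
        using infdist_attains_inf[OF compact_imp_closed[OF V(2)] Vne] by blast
      have "norm w < R0" using w V by auto
      moreover have "norm y \<le> norm w + norm (y - w)" by (rule norm_triangle_sub)
      moreover have "\<delta> = 2 * norm (y - w)" using w y by (simp add: g_def dist_norm)
      ultimately have "norm y \<le> R1" unfolding R1_def
        using norm_ge_zero[of "y - w"] by linarith
      then have "y \<in> Y j \<inter> cball 0 R1" using y by auto
      then obtain t where t: "t \<in> T" "dist y t < \<delta>/4" using elim(2) by blast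
      show False
      proof (cases "t \<in> V")
        case True
        then show False using infdist_le[OF True, of y] t y \<delta> by (simp add: g_def)
      next
        case False
        then have "\<delta> \<le> dist w t" using \<delta>(2)[OF w(1)] t by auto
        moreover have "dist w t \<le> dist w y + dist y t" by (rule dist_triangle)
        ultimately show False using w y t \<delta> by (simp add: g_def dist_commute)
      qed
    qed
    then show False by simp
  qed
  then show "T \<in> CU" unfolding CU_def using T by auto
qed


fun pgon :: "'a::real_normed_vector list \<Rightarrow> real \<Rightarrow> 'a" where
  "pgon [] = linepath 0 0"
| "pgon [x] = linepath x x"
| "pgon (x#y#zs) = linepath x y +++ pgon (y#zs)"

fun pset :: "'a::real_normed_vector list \<Rightarrow> 'a set" where
  "pset [] = {}"
| "pset [x] = {x}"
| "pset (x#y#zs) = closed_segment x y \<union> pset (y#zs)"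

lemma pathstart_pgon[simp]: "pathstart (pgon (x#xs)) = x"
  by (cases xs) auto

lemma pathfinish_pgon: "xs \<noteq> [] \<Longrightarrow> pathfinish (pgon xs) = last xs"
  by (induction xs rule: pgon.induct) auto

lemma path_image_pgon: "xs \<noteq> [] \<Longrightarrow> path_image (pgon xs) = pset xs"
proof (induction xs rule: pgon.induct)
  case (3 x y zs)
  then show ?case by (simp add: path_image_join)
qed (auto simp: path_image_def linepath_def)

lemma set_sub_pset: "set xs \<subseteq> pset xs"
  by (induction xs rule: pset.induct) auto

lemma pset_empty_iff[simp]: "pset xs = {} \<longleftrightarrow> xs = []"
  by (induction xs rule: pset.induct) auto

lemma compact_pset: "compact (pset xs)"
  by (induction xs rule: pset.induct) (auto intro: compact_Un)

lemma pset_append: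
  "xs \<noteq> [] \<Longrightarrow> ys \<noteq> [] \<Longrightarrow> pset (xs @ ys) = pset xs \<union> closed_segment (last xs) (hd ys) \<union> pset ys"
proof (induction xs rule: pset.induct)
  case (2 x)
  then show ?case by (cases ys) auto
next
  case (3 x y zs)
  then show ?case by auto
qed auto

lemma pset_Cons: "xs \<noteq> [] \<Longrightarrow> pset (x # xs) = closed_segment x (hd xs) \<union> pset xs"
  by (cases xs) auto

lemma pset_rev: "pset (rev xs) = pset xs"
proof (induction xs rule: pset.induct)
  case (3 x y zs)
  have "pset (rev (x#y#zs)) = pset (rev (y#zs) @ [x])" by simp
  also have "\<dots> = pset (rev (y#zs)) \<union> closed_segment y x \<union> {x}"
    by (subst pset_append) auto
  also have "\<dots> = closed_segment x y \<union> pset (y#zs)"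
    using 3 by (auto simp: closed_segment_commute)
  finally show ?case by simp
qed auto

lemma pset_scale: "pset (map (scaleR c) xs) = scaleR c ` pset xs"
proof (induction xs rule: pset.induct)
  case (3 x y zs)
  have "closed_segment (c *\<^sub>R x) (c *\<^sub>R y) = scaleR c ` closed_segment x y"
    by (rule closed_segment_linear_image) (simp add: linear_scaleR)
  with 3 show ?case by (simp add: image_Un)
qed auto

lemma norm_segment_le:
  assumes "z \<in> closed_segment a b" "norm a \<le> B" "norm b \<le> B"
  shows "norm z \<le> B"
proof -
  have "closed_segment a b \<subseteq> cball 0 B"
    using assms by (intro closed_segment_subset) (auto simp: convex_cball)
  then show ?thesis using assms(1) by auto
qed

lemma pset_norm_le: "(\<And>x. x \<in> set xs \<Longrightarrow> norm x \<le> B) \<Longrightarrow> z \<in> pset xs \<Longrightarrow> norm z \<le> B"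
proof (induction xs rule: pset.induct)
  case (3 x y zs)
  then show ?case using norm_segment_le[of z x y B] by auto
qed auto

lemma lipschitz_linepath: "(norm (b - a))-lipschitz_on S (linepath a b)"
proof (rule lipschitz_onI)
  fix s t
  have "linepath a b s - linepath a b t = (s - t) *\<^sub>R (b - a)"
    by (simp add: linepath_def algebra_simps)
  then show "dist (linepath a b s) (linepath a b t) \<le> norm (b - a) * dist s t"
    by (simp add: dist_norm dist_real_def)
qed simp

lemma dist_scale_real: "dist (c*x) (c*y) = \<bar>c\<bar> * dist x (y::real)"
  by (simp add: dist_real_def) (metis abs_mult right_diff_distrib)

lemma dist_shift_real: "dist (x - c) (y - c) = dist x (y::real)"
  by (simp add: dist_real_def)

lemma lipschitz_join:
  assumes g1: "L-lipschitz_on {0..1} g1" and g2: "L-lipschitz_on {0..1} g2"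
    and m: "g1 1 = g2 0"
  shows "(2*L)-lipschitz_on {0..1} (g1 +++ g2)"
proof -
  have L: "L \<ge> 0" using g1 lipschitz_on_nonneg by blast
  have a: "(2*L)-lipschitz_on {0..1/2} (\<lambda>x. g1 (2*x))"
  proof (rule lipschitz_onI)
    fix x y :: real assume "x \<in> {0..1/2}" "y \<in> {0..1/2}"
    then have "2*x \<in> {0..1}" "2*y \<in> {0..1}" by auto
    then have "dist (g1 (2*x)) (g1 (2*y)) \<le> L * dist (2*x) (2*y)"
      by (rule lipschitz_onD[OF g1])
    then show "dist (g1 (2*x)) (g1 (2*y)) \<le> 2*L * dist x y"
      by (simp add: dist_scale_real)
  qed (use L in auto)
  have b: "(2*L)-lipschitz_on {1/2..1} (\<lambda>x. g2 (2*x - 1))"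
  proof (rule lipschitz_onI)
    fix x y :: real assume "x \<in> {1/2..1}" "y \<in> {1/2..1}"
    then have "2*x-1 \<in> {0..1}" "2*y-1 \<in> {0..1}" by auto
    then have "dist (g2 (2*x-1)) (g2 (2*y-1)) \<le> L * dist (2*x-1) (2*y-1)"
      by (rule lipschitz_onD[OF g2])
    then show "dist (g2 (2*x-1)) (g2 (2*y-1)) \<le> 2*L * dist x y"
      by (simp add: dist_scale_real dist_shift_real)
  qed (use L in auto)
  show ?thesis
    using lipschitz_on_concat[OF a b] m unfolding joinpaths_def by simp
qed

lemma lipschitz_pgon:
  assumes "\<And>x. x \<in> set xs \<Longrightarrow> norm x \<le> B" "B \<ge> 0"
  shows "(2^length xs * (2*B))-lipschitz_on {0..1} (pgon xs)"
  using assms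
proof (induction xs rule: pgon.induct)
  case 1
  show ?case using 1 by (intro lipschitz_onI) (auto simp: linepath_def)
next
  case (2 x)
  show ?case using lipschitz_on_mono[OF lipschitz_linepath[of x x "{0..1}"]] 2 by auto
next
  case (3 x y zs)
  have IH: "(2^length (y#zs) * (2*B))-lipschitz_on {0..1} (pgon (y#zs))"
    using 3 by auto
  have "norm (y - x) \<le> norm y + norm x" by (rule norm_triangle_ineq4)
  also have "\<dots> \<le> 2*B" using 3(2)[of x] 3(2)[of y] by auto
  also have "\<dots> \<le> 2^length (y#zs) * (2*B)"
  proof -
    have "(1::real) \<le> 2^length (y#zs)" by (rule one_le_power) simp
    from mult_right_mono[OF this, of "2*B"] show ?thesis using 3(3) by simp
  qed
  finally have L1: "(2^length (y#zs) * (2*B))-lipschitz_on {0..1} (linepath x y)"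
    using lipschitz_on_mono[OF lipschitz_linepath[of y x] order_refl] by blast
  have m: "linepath x y 1 = pgon (y#zs) 0"
    using pathstart_pgon[of y zs] by (simp add: pathstart_def linepath_def)
  show ?case using lipschitz_join[OF L1 IH m] by (simp add: mult.assoc)
qed


definition idx :: "real \<Rightarrow> nat" where
  "idx t = (LEAST k. (1/2::real)^Suc k < t)"

lemma idx_eq:
  assumes "(1/2::real)^Suc k < t" "t \<le> (1/2)^k"
  shows "idx t = k"
  unfolding idx_def
proof (rule Least_equality)
  show "(1/2::real)^Suc k < t" by fact
next
  fix m assume m: "(1/2::real)^Suc m < t"
  show "k \<le> m"
  proof (rule ccontr)
    assume "\<not> k \<le> m"
    then have "Suc m \<le> k" by simp
    then have "(1/2::real)^k \<le> (1/2)^Suc m" by (rule power_decreasing) auto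
    then show False using m assms(2) by simp
  qed
qed

lemma idx_bounds:
  assumes "0 < t" "t \<le> 1"
  shows "(1/2::real)^Suc (idx t) < t \<and> t \<le> (1/2)^(idx t)"
proof -
  obtain k where k: "(1/2::real)^k < t" using real_arch_pow_inv[of t "1/2"] assms by auto
  have "(1/2::real)^Suc k \<le> (1/2)^k" by (rule power_decreasing) auto
  then have ex: "(1/2::real)^Suc k < t" using k by linarith
  have a: "(1/2::real)^Suc (idx t) < t" unfolding idx_def using ex by (rule LeastI)
  have b: "t \<le> (1/2)^(idx t)"
  proof (cases "idx t")
    case 0 then show ?thesis using assms by simp
  next
    case (Suc m)
    have "\<not> (1/2::real)^Suc m < t"
    proof
      assume "(1/2::real)^Suc m < t"
      then have "idx t \<le> m" unfolding idx_def by (rule Least_le)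
      then show False using Suc by simp
    qed
    then show ?thesis using Suc by simp
  qed
  show ?thesis using a b by simp
qed

lemma dyadic_concat:
  fixes p :: "nat \<Rightarrow> real \<Rightarrow> 'a::real_normed_vector"
  assumes lip: "\<And>k. ((1/2)^Suc k)-lipschitz_on {0..1} (p k)"
    and match: "\<And>k. p k 1 = p (Suc k) 0"
    and small: "\<And>k t. t \<in> {0..1} \<Longrightarrow> norm (p k t) \<le> (1/2)^Suc k"
  shows "\<exists>f::real \<Rightarrow> 'a. 1-lipschitz_on {0..1} f \<and> f 0 = 0 \<and> f ` {0..1} = insert 0 (\<Union>k. p k ` {0..1})"
proof -
  define f where "f t = (if t \<le> 0 then 0 else p (idx t) (2 - 2^Suc (idx t) * t))" for t
  have piece: "f t = p n (2 - 2^Suc n * t)" if t: "(1/2::real)^Suc n \<le> t" "t \<le> (1/2)^n" for n t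
  proof (cases "t = (1/2)^Suc n")
    case True
    have "t > 0" by (subst True) simp
    have "idx t = Suc n"
      using True \<open>t > 0\<close> by (intro idx_eq) (auto simp: power_Suc)
    then have "f t = p (Suc n) (2 - 2^Suc (Suc n) * t)" using \<open>t>0\<close> by (simp add: f_def)
    also have "2 - 2^Suc (Suc n) * t = 0" by (subst True) (simp add: power_one_over)
    also have "2 - 2^Suc n * t = 1" by (subst True) (simp add: power_one_over)
    ultimately show ?thesis using match[of n] by simp
  next
    case False
    then have "(1/2::real)^Suc n < t" using t by simp
    then have "idx t = n" using t by (intro idx_eq) auto
    moreover have "t > 0" using t(1) zero_less_power[of "1/2::real" "Suc n"] by linarith
    ultimately show ?thesis by (simp add: f_def)
  qed
  have tau: "2 - 2^Suc n * t \<in> {0..1}" if t: "(1/2::real)^Suc n \<le> t" "t \<le> (1/2)^n" for n t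
  proof -
    have "2^Suc n * (1/2::real)^Suc n = 1" by (simp add: power_one_over)
    moreover have "2^Suc n * (1/2::real)^n = 2" by (simp add: power_one_over)
    moreover have "2^Suc n * (1/2::real)^Suc n \<le> 2^Suc n * t" using t(1) by simp
    moreover have "2^Suc n * t \<le> 2^Suc n * (1/2::real)^n" using t(2) by simp
    ultimately show ?thesis by auto
  qed
  have f0: "f 0 = 0" by (simp add: f_def)
  have fsmall: "norm (f t) \<le> t" if "t \<in> {0..1}" for t
  proof (cases "t = 0")
    case True then show ?thesis by (simp add: f0)
  next
    case False
    then have t: "0 < t" "t \<le> 1" using that by auto
    define n where "n = idx t"
    have b: "(1/2::real)^Suc n < t" "t \<le> (1/2)^n" using idx_bounds[OF t] by (auto simp: n_def)
    have "norm (f t) = norm (p n (2 - 2^Suc n * t))" using piece[of n t] b by simp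
    also have "\<dots> \<le> (1/2)^Suc n" using small tau b by simp
    finally show ?thesis using b by simp
  qed
  have lipn: "1-lipschitz_on {(1/2::real)^n..1} f" for n
  proof (induction n)
    case 0
    show ?case by (intro lipschitz_onI) auto
  next
    case (Suc n)
    have a: "1-lipschitz_on {(1/2::real)^Suc n..(1/2)^n} f"
    proof (rule lipschitz_onI)
      fix x y assume x: "x \<in> {(1/2::real)^Suc n..(1/2)^n}" and y: "y \<in> {(1/2::real)^Suc n..(1/2)^n}"
      have "dist (f x) (f y) = dist (p n (2 - 2^Suc n * x)) (p n (2 - 2^Suc n * y))"
        using piece x y by auto
      also have "\<dots> \<le> (1/2)^Suc n * dist (2 - 2^Suc n * x) (2 - 2^Suc n * y)"
        using tau x y by (intro lipschitz_onD[OF lip]) auto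
      also have "dist (2 - 2^Suc n * x) (2 - 2^Suc n * y) = 2^Suc n * dist x y"
        by (simp add: dist_real_def abs_mult flip: right_diff_distrib)
      also have "(1/2::real)^Suc n * (2^Suc n * dist x y) = dist x y"
        by (simp add: power_one_over mult.assoc[symmetric])
      finally show "dist (f x) (f y) \<le> 1 * dist x y" by simp
    qed simp
    have "1-lipschitz_on {(1/2::real)^Suc n..1} (\<lambda>x. if x \<le> (1/2)^n then f x else f x)"
      by (rule lipschitz_on_concat[OF a Suc]) simp
    then show ?case by simp
  qed
  have lip1: "1-lipschitz_on {0..1} f"
  proof (rule lipschitz_onI)
    fix x y :: real assume x: "x \<in> {0..1}" and y: "y \<in> {0..1}"
    show "dist (f x) (f y) \<le> 1 * dist x y"
    proof (cases "x = 0 \<or> y = 0")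
      case True
      then show ?thesis
        using fsmall[OF x] fsmall[OF y] x y by (auto simp: f0 dist_real_def dist_norm norm_minus_commute)
    next
      case False
      then have "min x y > 0" using x y by auto
      then obtain n where n: "(1/2::real)^n < min x y" using real_arch_pow_inv[of "min x y" "1/2"] by auto
      show ?thesis using lipschitz_onD[OF lipn[of n], of x y] n x y by auto
    qed
  qed simp
  have img: "f ` {0..1} = insert 0 (\<Union>k. p k ` {0..1})"
  proof
    show "f ` {0..1} \<subseteq> insert 0 (\<Union>k. p k ` {0..1})"
    proof
      fix z assume "z \<in> f ` {0..1}"
      then obtain t where t: "t \<in> {0..1}" "z = f t" by auto
      show "z \<in> insert 0 (\<Union>k. p k ` {0..1})"
      proof (cases "t = 0")
        case True then show ?thesis using t f0 by simp
      next
        case False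
        then have t': "0 < t" "t \<le> 1" using t by auto
        define n where "n = idx t"
        have b: "(1/2::real)^Suc n \<le> t" "t \<le> (1/2)^n" using idx_bounds[OF t'] by (auto simp: n_def)
        have "z = p n (2 - 2^Suc n * t)" using piece[OF b] t by simp
        then show ?thesis using tau[OF b] by blast
      qed
    qed
  next
    show "insert 0 (\<Union>k. p k ` {0..1}) \<subseteq> f ` {0..1}"
    proof
      fix z assume "z \<in> insert 0 (\<Union>k. p k ` {0..1})"
      then consider "z = 0" | k s where "s \<in> {0..1}" "z = p k s" by auto
      then show "z \<in> f ` {0..1}"
      proof cases
        case 1 then show ?thesis using f0 by force
      next
        case 2
        define t where "t = (2 - s) / 2^Suc k"
        have b: "(1/2::real)^Suc k \<le> t" "t \<le> (1/2)^k"
        proof -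
          have "(1::real) / 2^Suc k \<le> (2 - s) / 2^Suc k" using 2(1) by (intro divide_right_mono) auto
          moreover have "(2 - s) / 2^Suc k \<le> (2::real) / 2^Suc k" using 2(1) by (intro divide_right_mono) auto
          moreover have "(2::real) / 2^Suc k = 1 / 2^k" by simp
          ultimately show "(1/2::real)^Suc k \<le> t" "t \<le> (1/2)^k" by (auto simp: t_def power_one_over)
        qed
        have e: "2 - 2^Suc k * t = s" by (simp add: t_def)
        have "(1/2::real)^k \<le> 1" by (rule power_le_one) auto
        moreover have "(0::real) \<le> (1/2)^Suc k" by simp
        ultimately have t01: "t \<in> {0..1}" using b by auto
        have "f t = z" using piece[OF b] e 2(2) by simp
        then show ?thesis using t01 by blast
      qed
    qed
  qed
  have "1-lipschitz_on {0..1} f \<and> f 0 = 0 \<and> f ` {0..1} = insert 0 (\<Union>k. p k ` {0..1})"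
    using lip1 f0 img by (intro conjI)
  then show ?thesis by (rule exI[where x=f])
qed


lemma chain_exists:
  fixes S :: "'a::metric_space set"
  assumes "connected S" "x \<in> S" "y \<in> S" "\<eta> > 0"
  shows "\<exists>cs. cs \<noteq> [] \<and> hd cs = x \<and> last cs = y \<and> set cs \<subseteq> S \<and> successively (\<lambda>a b. dist a b < \<eta>) cs"
proof -
  define R where "R a b \<longleftrightarrow> (\<exists>cs. cs \<noteq> [] \<and> hd cs = a \<and> last cs = b \<and> set cs \<subseteq> S \<and> successively (\<lambda>a b. dist a b < \<eta>) cs)" for a b
  have "R x y"
  proof (rule connected_equivalence_relation[OF assms(1-3)])
    fix a b assume "R a b"
    then obtain cs where "cs \<noteq> []" "hd cs = a" "last cs = b" "set cs \<subseteq> S" "successively (\<lambda>a b. dist a b < \<eta>) cs"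
      unfolding R_def by blast
    then show "R b a" unfolding R_def
      by (intro exI[where x="rev cs"]) (auto simp: hd_rev last_rev dist_commute)
  next
    fix a b c assume "R a b" "R b c"
    then obtain cs ds where cs: "cs \<noteq> []" "hd cs = a" "last cs = b" "set cs \<subseteq> S" "successively (\<lambda>a b. dist a b < \<eta>) cs"
      and ds: "ds \<noteq> []" "hd ds = b" "last ds = c" "set ds \<subseteq> S" "successively (\<lambda>a b. dist a b < \<eta>) ds"
      unfolding R_def by blast
    have "R a c" unfolding R_def
    proof (intro exI[where x="cs @ tl ds"] conjI)
      show "cs @ tl ds \<noteq> []" "hd (cs @ tl ds) = a" using cs by auto
      show "last (cs @ tl ds) = c" using cs ds
        by (cases ds; cases "tl ds") (auto)
      show "set (cs @ tl ds) \<subseteq> S" using cs ds by (auto dest: list.set_sel(2))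
      have sd: "successively (\<lambda>a b. dist a b < \<eta>) (tl ds)" using ds(5)
        by (cases ds) (auto simp: successively_Cons)
      have "tl ds \<noteq> [] \<Longrightarrow> dist b (hd (tl ds)) < \<eta>" using ds
        by (cases ds) (auto simp: successively_Cons)
      then show "successively (\<lambda>a b. dist a b < \<eta>) (cs @ tl ds)"
        using cs sd by (auto simp: successively_append_iff)
    qed
    then show "R a c" .
  next
    fix a assume a: "a \<in> S"
    show "\<exists>T. openin (top_of_set S) T \<and> a \<in> T \<and> (\<forall>x\<in>T. R a x)"
    proof (intro exI[where x="S \<inter> ball a \<eta>"] conjI ballI)
      show "openin (top_of_set S) (S \<inter> ball a \<eta>)" by (simp add: openin_open_Int)
      show "a \<in> S \<inter> ball a \<eta>" using a assms(4) by auto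
      fix x assume "x \<in> S \<inter> ball a \<eta>"
      then show "R a x" unfolding R_def using a
        by (intro exI[where x="[a, x]"]) auto
    qed
  qed
  then show ?thesis unfolding R_def .
qed

lemma perturb_chain:
  fixes cs :: "'a::euclidean_space list"
  assumes dim: "2 \<le> DIM('a)" and D: "\<And>U. open U \<Longrightarrow> U \<noteq> {} \<Longrightarrow> \<exists>d\<in>D. d \<in> U"
    and g: "\<gamma> > 0" and ne: "cs \<noteq> []"
  shows "\<exists>cs'. list_all2 (\<lambda>a b. dist a b < \<gamma>) cs cs' \<and> set cs' \<subseteq> D \<and> 0 \<notin> pset cs'"
  using ne
proof (induction cs rule: list_nonempty_induct)
  case (single x)
  have "open (ball x \<gamma> - {0})" by (simp add: open_Diff)
  moreover have "ball x \<gamma> - {0} \<noteq> {}"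
  proof
    assume "ball x \<gamma> - {0} = {}"
    then have "ball x \<gamma> \<subseteq> {0}" by auto
    then show False using g
      by (metis finite_imp_not_open open_ball ball_eq_empty finite.emptyI finite_insert finite_subset not_less)
  qed
  ultimately obtain d where d: "d \<in> D" "d \<in> ball x \<gamma> - {0}" using D by blast
  show ?case
    by (intro exI[where x="[d]"]) (use d in auto)
next
  case (cons x xs)
  then obtain ys where ys: "list_all2 (\<lambda>a b. dist a b < \<gamma>) xs ys" "set ys \<subseteq> D" "0 \<notin> pset ys"
    by blast
  have yne: "ys \<noteq> []" using ys(1) cons(1) by (cases ys) auto
  define h where "h = hd ys"
  have "h \<in> pset ys" using set_sub_pset[of ys] yne hd_in_set[OF yne] by (auto simp: h_def)
  then have h0: "h \<noteq> 0" using ys(3) by auto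
  have "open (ball x \<gamma> - span {h})" by (simp add: open_Diff)
  moreover have "ball x \<gamma> - span {h} \<noteq> {}"
  proof
    assume "ball x \<gamma> - span {h} = {}"
    then have "ball x \<gamma> \<subseteq> span {h}" by auto
    then have "ball x \<gamma> \<subseteq> interior (span {h})" by (simp add: interior_maximal)
    moreover have "dim (span {h}) < DIM('a)" using dim h0 by simp
    then have "interior (span {h}) = {}" by (rule empty_interior_lowdim)
    ultimately show False using g by auto
  qed
  ultimately obtain d where d: "d \<in> D" "d \<in> ball x \<gamma>" "d \<notin> span {h}" using D by blast
  have "0 \<notin> closed_segment d h"
  proof
    assume "0 \<in> closed_segment d h"
    then obtain u where u: "0 \<le> u" "u \<le> 1" "(1 - u) *\<^sub>R d + u *\<^sub>R h = 0"
      unfolding closed_segment_def by auto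
    show False
    proof (cases "u = 1")
      case True then show False using u h0 by simp
    next
      case False
      have "(1-u) *\<^sub>R d = - (u *\<^sub>R h)" using u(3) by (simp add: eq_neg_iff_add_eq_0)
      then have "(1/(1-u)) *\<^sub>R ((1-u) *\<^sub>R d) = (1/(1-u)) *\<^sub>R (- (u *\<^sub>R h))" by simp
      moreover have "(1/(1-u)) *\<^sub>R ((1-u) *\<^sub>R d) = d" using False by simp
      ultimately have "d = (- u / (1 - u)) *\<^sub>R h" by simp
      moreover have "(- u / (1 - u)) *\<^sub>R h \<in> span {h}" by (intro span_mul span_base) simp
      ultimately have "d \<in> span {h}" by metis
      then show False using d by simp
    qed
  qed
  then have "0 \<notin> pset (d # ys)" using ys(3) yne by (simp add: pset_Cons h_def)
  then show ?case using d ys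
    by (intro exI[where x="d # ys"]) (auto simp: dist_commute)
qed

lemma pset_near:
  fixes xs :: "'a::euclidean_space list"
  assumes "successively (\<lambda>a b. dist a b \<le> \<delta>) xs" "\<And>x. x \<in> set xs \<Longrightarrow> \<exists>t\<in>T. dist x t \<le> e"
    and "z \<in> pset xs" "\<delta> \<ge> 0"
  shows "\<exists>t\<in>T. dist z t \<le> \<delta> + e"
  using assms
proof (induction xs rule: pset.induct)
  case (2 x)
  then obtain t where "t \<in> T" "dist z t \<le> e" by auto
  then show ?case using 2(4) by (intro bexI[of _ t]) auto
next
  case (3 x y zs)
  show ?case
  proof (cases "z \<in> closed_segment x y")
    case True
    then have "dist z x \<le> dist x y" by (simp add: dist_in_closed_segment)
    also have "dist x y \<le> \<delta>" using 3(2) by simp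
    finally have zx: "dist z x \<le> \<delta>" .
    obtain t where t: "t \<in> T" "dist x t \<le> e" using 3(3) by auto
    have "dist z t \<le> dist z x + dist x t" by (rule dist_triangle)
    then show ?thesis using zx t by (intro bexI[of _ t]) auto
  next
    case False
    then show ?thesis using 3 by auto
  qed
qed auto


lemma arc_norm:
  fixes a b :: "'a::real_inner"
  assumes "norm a = \<rho>" "norm b = \<rho>" "inner a b \<ge> 0" "z \<in> closed_segment a b"
  shows "\<rho>^2 / 2 \<le> (norm z)^2"
proof -
  obtain t where t: "0 \<le> t" "t \<le> 1" "z = (1 - t) *\<^sub>R a + t *\<^sub>R b"
    using assms(4) unfolding closed_segment_def by auto
  have "(norm z)^2 = inner z z" by (simp add: power2_norm_eq_inner)
  also have "\<dots> = (1-t)^2 * inner a a + t^2 * inner b b + 2 * t * (1-t) * inner a b"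
    unfolding t(3) by (simp add: inner_add_left inner_add_right inner_commute power2_eq_square algebra_simps)
  also have "inner a a = \<rho>^2" using assms(1) by (metis power2_norm_eq_inner)
  also have "inner b b = \<rho>^2" using assms(2) by (metis power2_norm_eq_inner)
  finally have eq: "(norm z)^2 = ((1-t)^2 + t^2) * \<rho>^2 + 2 * t * (1-t) * inner a b" by (simp add: algebra_simps)
  have "0 \<le> 2 * t * (1-t) * inner a b" using t assms(3) by simp
  moreover have "1/2 \<le> (1-t)^2 + t^2"
  proof -
    have "0 \<le> (2*t - 1)^2" by simp
    then show ?thesis by (simp add: power2_eq_square algebra_simps)
  qed
  then have "\<rho>^2 / 2 \<le> ((1-t)^2 + t^2) * \<rho>^2"
    using mult_right_mono[of "1/2" "(1-t)^2 + t^2" "\<rho>^2"] by simp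
  ultimately show ?thesis using eq by linarith
qed

lemma radial_norm:
  fixes u :: "'a::real_normed_vector"
  assumes "0 \<le> a" "0 \<le> b" "z \<in> closed_segment (a *\<^sub>R u) (b *\<^sub>R u)"
  shows "min a b * norm u \<le> norm z" "norm z \<le> max a b * norm u"
proof -
  obtain t where t: "0 \<le> t" "t \<le> 1" "z = (1 - t) *\<^sub>R (a *\<^sub>R u) + t *\<^sub>R (b *\<^sub>R u)"
    using assms(3) unfolding closed_segment_def by auto
  have z: "z = ((1-t)*a + t*b) *\<^sub>R u" using t(3) by (simp add: algebra_simps)
  have c0: "0 \<le> (1-t)*a + t*b" using t assms by simp
  have "min a b \<le> (1-t)*a + t*b"
  proof -
    have "(1-t) * min a b \<le> (1-t)*a" "t * min a b \<le> t * b" using t by (auto intro: mult_left_mono)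
    then show ?thesis by (simp add: algebra_simps)
  qed
  then show "min a b * norm u \<le> norm z" using z c0 by (simp add: mult_right_mono)
  have "(1-t)*a + t*b \<le> max a b"
  proof -
    have "(1-t)*a \<le> (1-t) * max a b" "t * b \<le> t * max a b" using t by (auto intro: mult_left_mono)
    then show ?thesis by (simp add: algebra_simps)
  qed
  then show "norm z \<le> max a b * norm u" using z c0 by (simp add: mult_right_mono)
qed


lemma pset_append_sub1: "pset xs \<subseteq> pset (xs @ ys)"
  by (cases "xs = []"; cases "ys = []") (auto simp: pset_append)

lemma pset_append_sub2: "pset ys \<subseteq> pset (xs @ ys)"
  by (cases "xs = []"; cases "ys = []") (auto simp: pset_append)

lemma segs_sub:
  "successively (\<lambda>a b. closed_segment a b \<subseteq> G) xs \<Longrightarrow> set xs \<subseteq> G \<Longrightarrow> pset xs \<subseteq> G"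
  by (induction xs rule: pset.induct) auto

lemma own_segs: "successively (\<lambda>a b. closed_segment a b \<subseteq> pset L) L"
proof (induction L rule: pset.induct)
  case (3 x y zs)
  then show ?case
    by (auto elim!: successively_mono)
qed auto

definition e1 :: "'a::euclidean_space" where "e1 = (SOME b. b \<in> Basis)"

lemma norm_e1: "norm (e1::'a::euclidean_space) = 1"
proof -
  have "(SOME b. b \<in> (Basis::'a set)) \<in> Basis" by (rule someI_ex) (use nonempty_Basis in blast)
  then show ?thesis by (simp add: e1_def)
qed

definition wpt :: "real \<Rightarrow> 'a::euclidean_space \<Rightarrow> 'a \<Rightarrow> 'a" where
  "wpt \<rho> x y = (if x + y = 0 then \<rho> *\<^sub>R (SOME e. norm e = 1 \<and> inner x e = 0)
                else (\<rho> / norm (x + y)) *\<^sub>R (x + y))"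

lemma wpt:
  fixes x y :: "'a::euclidean_space"
  assumes dim: "2 \<le> DIM('a)" and "norm x = \<rho>" "norm y = \<rho>" "\<rho> \<ge> 0"
  shows "norm (wpt \<rho> x y) = \<rho> \<and> inner x (wpt \<rho> x y) \<ge> 0 \<and> inner y (wpt \<rho> x y) \<ge> 0"
proof (cases "x + y = 0")
  case True
  obtain z where z: "z \<noteq> 0" "orthogonal x z" using orthogonal_to_vector_exists[OF dim] by blast
  have "\<exists>e. norm e = 1 \<and> inner x e = 0"
    using z by (intro exI[where x="z /\<^sub>R norm z"]) (auto simp: orthogonal_def)
  then have e: "norm (SOME e. norm e = 1 \<and> inner x e = 0) = 1 \<and> inner x (SOME e. norm e = 1 \<and> inner x e = (0::real)) = 0"
    by (rule someI_ex)
  have y: "y = - x" using True by (simp add: eq_neg_iff_add_eq_0 add.commute)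
  show ?thesis using True e assms(4) by (simp add: wpt_def y)
next
  case False
  have cs: "- inner x y \<le> norm x * norm y"
    using norm_cauchy_schwarz[of x "-y"] by simp
  have "inner x (x + y) \<ge> 0"
    using cs assms by (simp add: inner_add_right power2_norm_eq_inner[symmetric] power2_eq_square)
  moreover have "inner y (x + y) \<ge> 0"
    using cs assms by (simp add: inner_add_right inner_commute power2_norm_eq_inner[symmetric] power2_eq_square)
  ultimately show ?thesis using False assms(4) by (simp add: wpt_def)
qed

definition hub :: "real \<Rightarrow> 'a::euclidean_space \<Rightarrow> 'a" where
  "hub \<rho> x = (\<rho> / norm x) *\<^sub>R x"

lemma norm_hub: "x \<noteq> 0 \<Longrightarrow> \<rho> \<ge> 0 \<Longrightarrow> norm (hub \<rho> x) = \<rho>"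
  by (simp add: hub_def)

definition tour :: "real \<Rightarrow> 'a::euclidean_space list \<Rightarrow> 'a list" where
  "tour \<rho> L = [wpt \<rho> (\<rho> *\<^sub>R e1) (hub \<rho> (hd L)), hub \<rho> (hd L)] @ L @ rev L @
      [hub \<rho> (hd L), wpt \<rho> (\<rho> *\<^sub>R e1) (hub \<rho> (hd L)), \<rho> *\<^sub>R e1]"

fun tours :: "real \<Rightarrow> 'a::euclidean_space list list \<Rightarrow> 'a list" where
  "tours \<rho> [] = []"
| "tours \<rho> (L # Ls) = tour \<rho> L @ tours \<rho> Ls"

definition Wl :: "nat \<Rightarrow> 'a::euclidean_space list list \<Rightarrow> 'a list \<Rightarrow> 'a \<Rightarrow> 'a list" where
  "Wl j Ls E u = [(2 * (real j + 1)) *\<^sub>R u, wpt (2 * (real j + 1)) ((2 * (real j + 1)) *\<^sub>R u) ((2 * (real j + 1)) *\<^sub>R e1),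
      (2 * (real j + 1)) *\<^sub>R e1] @ tours (2 * (real j + 1)) Ls @
      [wpt (2 * (real j + 1)) ((2 * (real j + 1)) *\<^sub>R e1) (hub (2 * (real j + 1)) (hd E)), hub (2 * (real j + 1)) (hd E)] @ E"

definition valid :: "nat \<times> 'a::euclidean_space list list \<times> 'a list \<Rightarrow> bool" where
  "valid c = (case c of (j, Ls, E) \<Rightarrow> j \<ge> 1 \<and> E \<noteq> [] \<and>
     (\<forall>L\<in>set Ls. L \<noteq> [] \<and> norm (hd L) \<ge> real j + 1 \<and> 0 \<notin> pset L) \<and>
     norm (hd E) \<ge> real j + 1 \<and> 0 \<notin> pset E \<and> norm (last E) \<le> 1 / real j)"

definition good :: "'a::euclidean_space list list \<Rightarrow> 'a list \<Rightarrow> 'a set" where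
  "good Ls E = (\<Union>L\<in>set Ls. pset L) \<union> pset E"

lemma arc_far:
  fixes a b :: "'a::euclidean_space"
  assumes "norm a = 2 * (real j + 1)" "norm b = 2 * (real j + 1)" "inner a b \<ge> 0"
  shows "closed_segment a b \<subseteq> {z. real j < norm z}"
proof
  fix z assume z: "z \<in> closed_segment a b"
  have "(2 * (real j + 1))^2 / 2 \<le> (norm z)^2" by (rule arc_norm[OF assms z])
  moreover have "(real j)^2 < (2 * (real j + 1))^2 / 2"
  proof -
    have "0 \<le> real j" by simp
    then have "0 < 4 + (real j * 8 + real j * (real j * 2))" by (simp add: add_pos_nonneg)
    then show ?thesis by (simp add: power2_eq_square algebra_simps)
  qed
  ultimately have "(real j)^2 < (norm z)^2" by linarith
  then show "z \<in> {z. real j < norm z}" using power2_less_imp_less[of "real j" "norm z"] by simp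
qed

lemma radial_far:
  fixes x :: "'a::euclidean_space"
  assumes "norm x \<ge> real j + 1"
  shows "closed_segment (hub (2 * (real j + 1)) x) x \<subseteq> {z. real j < norm z}"
proof
  fix z assume z: "z \<in> closed_segment (hub (2 * (real j + 1)) x) x"
  have x0: "x \<noteq> 0" using assms by auto
  have zs: "z \<in> closed_segment ((2 * (real j + 1) / norm x) *\<^sub>R x) (1 *\<^sub>R x)" using z by (simp add: hub_def)
  have "min (2 * (real j + 1) / norm x) 1 * norm x \<le> norm z"
    by (rule radial_norm(1)[OF _ _ zs]) auto
  moreover have "min (2 * (real j + 1) / norm x) 1 * norm x = min (2 * (real j + 1)) (norm x)"
    using x0 by (simp add: min_def field_simps)
  ultimately show "z \<in> {z. real j < norm z}" using assms by auto
qed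


lemma tour_props:
  fixes L :: "'a::euclidean_space list"
  assumes dim: "2 \<le> DIM('a)" and L: "L \<noteq> []" "norm (hd L) \<ge> real j + 1"
    and G: "{z. real j < norm z} \<subseteq> G" "pset L \<subseteq> G"
  defines "\<rho> \<equiv> 2 * (real j + 1)"
  shows "successively (\<lambda>a b. closed_segment a b \<subseteq> G) (\<rho> *\<^sub>R e1 # tour \<rho> L)"
    and "set (tour \<rho> L) \<subseteq> G" and "last (tour \<rho> L) = \<rho> *\<^sub>R e1" and "pset L \<subseteq> pset (tour \<rho> L)"
proof -
  define P where "P a b \<longleftrightarrow> closed_segment a b \<subseteq> G" for a b
  define e0 where "e0 = \<rho> *\<^sub>R (e1::'a)"
  define h where "h = hub \<rho> (hd L)"
  define w where "w = wpt \<rho> e0 h"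
  have rho: "\<rho> > 0" "\<rho> = 2 * (real j + 1)" by (simp_all add: \<rho>_def)
  have ne0: "norm e0 = \<rho>" using rho by (simp add: e0_def norm_e1)
  have hL0: "hd L \<noteq> 0" using L by auto
  have nh: "norm h = \<rho>" using hL0 rho by (simp add: h_def norm_hub)
  have wp: "norm w = \<rho>" "inner e0 w \<ge> 0" "inner h w \<ge> 0"
    using wpt[OF dim ne0 nh] rho by (simp_all add: w_def)
  have Pew: "P e0 w" "P w e0" unfolding P_def
    using arc_far[of e0 j w] arc_far[of w j e0] wp ne0 rho G(1) by (auto simp: inner_commute)
  have Pwh: "P h w" "P w h" unfolding P_def
    using arc_far[of h j w] arc_far[of w j h] wp nh rho G(1) by (auto simp: inner_commute)
  have PhL: "P h (hd L)" "P (hd L) h" unfolding P_def h_def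
    using radial_far[OF L(2)] G(1) rho by (auto simp: closed_segment_commute)
  have sL: "successively P L"
    using own_segs[of L] G(2) unfolding P_def by (auto elim!: successively_mono)
  have sLr: "successively P (rev L)"
    using own_segs[of L] G(2) unfolding P_def successively_rev
    by (auto elim!: successively_mono simp: closed_segment_commute)
  have Pll: "P (last L) (last L)" unfolding P_def using G(2) set_sub_pset[of L] last_in_set[OF L(1)] by auto
  have tour_eq: "tour \<rho> L = [w, h] @ L @ rev L @ [h, w, e0]"
    by (simp add: tour_def w_def h_def e0_def)
  have "successively P ([e0, w, h] @ L @ rev L @ [h, w, e0])"
    using Pew Pwh PhL sL sLr Pll L
    by (simp add: successively_append_iff successively_Cons hd_rev last_rev)
  then show "successively (\<lambda>a b. closed_segment a b \<subseteq> G) (\<rho> *\<^sub>R e1 # tour \<rho> L)"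
    unfolding P_def tour_eq e0_def by simp
  have "e0 \<in> G" "w \<in> G" "h \<in> G" using ne0 wp nh rho G(1) by auto
  then show "set (tour \<rho> L) \<subseteq> G" using G(2) set_sub_pset[of L] unfolding tour_eq by auto
  show "last (tour \<rho> L) = \<rho> *\<^sub>R e1" unfolding tour_eq e0_def by simp
  show "pset L \<subseteq> pset (tour \<rho> L)" unfolding tour_eq
    by (rule order_trans[OF pset_append_sub1 pset_append_sub2])
qed

lemma tours_props:
  fixes Ls :: "'a::euclidean_space list list"
  assumes dim: "2 \<le> DIM('a)"
    and Ls: "\<And>L. L \<in> set Ls \<Longrightarrow> L \<noteq> [] \<and> norm (hd L) \<ge> real j + 1 \<and> pset L \<subseteq> G"
    and G: "{z. real j < norm z} \<subseteq> G"
  defines "\<rho> \<equiv> 2 * (real j + 1)"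
  shows "successively (\<lambda>a b. closed_segment a b \<subseteq> G) (\<rho> *\<^sub>R e1 # tours \<rho> Ls)
     \<and> set (tours \<rho> Ls) \<subseteq> G \<and> last (\<rho> *\<^sub>R e1 # tours \<rho> Ls) = \<rho> *\<^sub>R e1
     \<and> (\<forall>L\<in>set Ls. pset L \<subseteq> pset (tours \<rho> Ls))"
  using Ls
proof (induction Ls)
  case Nil
  then show ?case by simp
next
  case (Cons L Ls)
  let ?P = "\<lambda>a b. closed_segment a b \<subseteq> G"
  have IH: "successively ?P (\<rho> *\<^sub>R e1 # tours \<rho> Ls)" "set (tours \<rho> Ls) \<subseteq> G"
     "last (\<rho> *\<^sub>R e1 # tours \<rho> Ls) = \<rho> *\<^sub>R e1" "\<forall>L\<in>set Ls. pset L \<subseteq> pset (tours \<rho> Ls)"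
    using Cons by auto
  have L: "L \<noteq> []" "norm (hd L) \<ge> real j + 1" "pset L \<subseteq> G" using Cons.prems by auto
  note T = tour_props[OF dim L(1,2) G L(3), folded \<rho>_def]
  have tne: "tour \<rho> L \<noteq> []" by (simp add: tour_def)
  have "successively ?P ((\<rho> *\<^sub>R e1 # tour \<rho> L) @ tours \<rho> Ls)"
    using T(1,3) IH(1) tne by (auto simp: successively_append_iff successively_Cons)
  moreover have "last (\<rho> *\<^sub>R e1 # tours \<rho> (L # Ls)) = \<rho> *\<^sub>R e1"
    using IH(3) T(3) tne by (cases "tours \<rho> Ls = []") auto
  moreover have "\<forall>L'\<in>set (L # Ls). pset L' \<subseteq> pset (tours \<rho> (L # Ls))"
    using T(4) IH(4) pset_append_sub1[of "tour \<rho> L" "tours \<rho> Ls"] pset_append_sub2[of "tours \<rho> Ls" "tour \<rho> L"]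
    by (simp; blast)
  ultimately show ?case using T(2) IH(2) by simp
qed

lemma Wl_props:
  fixes Ls :: "'a::euclidean_space list list"
  assumes dim: "2 \<le> DIM('a)" and v: "valid (j, Ls, E)" and u: "norm u = 1"
  shows "Wl j Ls E u \<noteq> []" "hd (Wl j Ls E u) = (2 * (real j + 1)) *\<^sub>R u"
    "last (Wl j Ls E u) = last E"
    "pset (Wl j Ls E u) \<subseteq> {z. real j < norm z} \<union> good Ls E"
    "good Ls E \<subseteq> pset (Wl j Ls E u)"
    "0 \<notin> pset (Wl j Ls E u)"
proof -
  define \<rho> where "\<rho> = 2 * (real j + 1)"
  define G where "G = {z. real j < norm z} \<union> good Ls E"
  define P where "P a b \<longleftrightarrow> closed_segment a b \<subseteq> G" for a b
  define e0 where "e0 = \<rho> *\<^sub>R (e1::'a)"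
  define w0 where "w0 = wpt \<rho> (\<rho> *\<^sub>R u) e0"
  define hE where "hE = hub \<rho> (hd E)"
  define wE where "wE = wpt \<rho> e0 hE"
  have vv: "j \<ge> 1" "E \<noteq> []" "\<And>L. L\<in>set Ls \<Longrightarrow> L \<noteq> [] \<and> norm (hd L) \<ge> real j + 1 \<and> 0 \<notin> pset L"
     "norm (hd E) \<ge> real j + 1" "0 \<notin> pset E" "norm (last E) \<le> 1 / real j"
    using v unfolding valid_def by auto
  have rho: "\<rho> > 0" by (simp add: \<rho>_def)
  have W: "Wl j Ls E u = [\<rho> *\<^sub>R u, w0] @ (e0 # tours \<rho> Ls) @ [wE, hE] @ E"
    by (simp add: Wl_def \<rho>_def w0_def e0_def hE_def wE_def)
  show "Wl j Ls E u \<noteq> []" "hd (Wl j Ls E u) = (2 * (real j + 1)) *\<^sub>R u" "last (Wl j Ls E u) = last E"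
    using vv(2) by (simp_all add: W \<rho>_def)
  have G1: "{z. real j < norm z} \<subseteq> G" by (auto simp: G_def)
  have Lsub: "pset L \<subseteq> G" if "L \<in> set Ls" for L using that by (auto simp: G_def good_def)
  have TS: "successively P (e0 # tours \<rho> Ls)" "set (tours \<rho> Ls) \<subseteq> G"
     "last (e0 # tours \<rho> Ls) = e0" "\<forall>L\<in>set Ls. pset L \<subseteq> pset (tours \<rho> Ls)"
    using tours_props[OF dim _ G1, of Ls] vv(3) Lsub unfolding P_def e0_def \<rho>_def by auto
  have ne0: "norm e0 = \<rho>" using rho by (simp add: e0_def norm_e1)
  have nu: "norm (\<rho> *\<^sub>R u) = \<rho>" using rho u by simp
  have hE0: "hd E \<noteq> 0" using vv(4) by auto
  have nhE: "norm hE = \<rho>" using hE0 rho by (simp add: hE_def norm_hub)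
  have w0p: "norm w0 = \<rho>" "inner (\<rho> *\<^sub>R u) w0 \<ge> 0" "inner e0 w0 \<ge> 0"
    using wpt[OF dim nu ne0] rho by (simp_all add: w0_def)
  have wEp: "norm wE = \<rho>" "inner e0 wE \<ge> 0" "inner hE wE \<ge> 0"
    using wpt[OF dim ne0 nhE] rho by (simp_all add: wE_def)
  have P1: "P (\<rho> *\<^sub>R u) w0" "P w0 e0" "P e0 wE" "P wE hE" unfolding P_def
    using arc_far[of "\<rho> *\<^sub>R u" j w0] arc_far[of w0 j e0] arc_far[of e0 j wE] arc_far[of wE j hE]
      w0p wEp ne0 nu nhE G1 by (auto simp: inner_commute \<rho>_def)
  have P2: "P hE (hd E)" unfolding P_def hE_def \<rho>_def
    using radial_far[OF vv(4)] G1 by auto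
  have sE: "successively P E"
    using own_segs[of E] unfolding P_def G_def good_def by (auto elim!: successively_mono)
  have "successively P ([\<rho> *\<^sub>R u, w0] @ (e0 # tours \<rho> Ls) @ [wE, hE] @ E)"
    using P1 P2 sE TS(1,3) vv(2)
    by (cases "tours \<rho> Ls = []") (simp_all add: successively_append_iff successively_Cons)
  moreover have "set ([\<rho> *\<^sub>R u, w0] @ (e0 # tours \<rho> Ls) @ [wE, hE] @ E) \<subseteq> G"
  proof -
    have "\<rho> *\<^sub>R u \<in> G" "w0 \<in> G" "e0 \<in> G" "wE \<in> G" "hE \<in> G"
      using nu w0p ne0 wEp nhE G1 by (auto simp: \<rho>_def)
    moreover have "set E \<subseteq> G" using set_sub_pset[of E] by (auto simp: G_def good_def)
    ultimately show ?thesis using TS(2) by auto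
  qed
  ultimately have "pset (Wl j Ls E u) \<subseteq> G" unfolding W P_def by (rule segs_sub)
  then show "pset (Wl j Ls E u) \<subseteq> {z. real j < norm z} \<union> good Ls E" by (simp add: G_def)
  then show "0 \<notin> pset (Wl j Ls E u)"
    using vv(3,5) by (auto simp: good_def)
  have "pset E \<subseteq> pset (Wl j Ls E u)" unfolding W
    using pset_append_sub2[of E "[\<rho> *\<^sub>R u, w0] @ (e0 # tours \<rho> Ls) @ [wE, hE]"] by simp
  moreover have "pset L \<subseteq> pset (Wl j Ls E u)" if "L \<in> set Ls" for L
  proof -
    have "pset (tours \<rho> Ls) \<subseteq> pset (e0 # tours \<rho> Ls)"
      using pset_append_sub2[of "tours \<rho> Ls" "[e0]"] by simp
    also have "\<dots> \<subseteq> pset ([\<rho> *\<^sub>R u, w0] @ (e0 # tours \<rho> Ls) @ [wE, hE] @ E)"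
      using pset_append_sub2[of "(e0 # tours \<rho> Ls) @ [wE, hE] @ E" "[\<rho> *\<^sub>R u, w0]"]
        pset_append_sub1[of "e0 # tours \<rho> Ls" "[wE, hE] @ E"] by auto
    finally show ?thesis using TS(4) that W by auto
  qed
  ultimately show "good Ls E \<subseteq> pset (Wl j Ls E u)" by (auto simp: good_def)
qed


lemma la2_hd_last:
  "list_all2 P xs ys \<Longrightarrow> xs \<noteq> [] \<Longrightarrow> ys \<noteq> [] \<and> P (hd xs) (hd ys) \<and> P (last xs) (last ys)"
proof (induction xs ys rule: list_all2_induct)
  case (Cons x xs y ys)
  then show ?case by (cases "xs = []") (auto dest: list_all2_lengthD)
qed simp

lemma la2_set: "list_all2 P xs ys \<Longrightarrow> y \<in> set ys \<Longrightarrow> \<exists>x\<in>set xs. P x y"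
  by (induction xs ys rule: list_all2_induct) auto

lemma la2_succ:
  fixes xs ys :: "'a::metric_space list"
  assumes "list_all2 (\<lambda>a b. dist a b < \<gamma>) xs ys" "successively (\<lambda>a b. dist a b < \<eta>) xs"
  shows "successively (\<lambda>a b. dist a b \<le> \<eta> + 2*\<gamma>) ys"
  using assms
proof (induction xs ys rule: list_all2_induct)
  case (Cons x xs y ys)
  show ?case
  proof (cases "xs = []")
    case True then show ?thesis using Cons by simp
  next
    case False
    have h: "ys \<noteq> []" "dist (hd xs) (hd ys) < \<gamma>" using la2_hd_last[OF Cons(2) False] by auto
    have "dist x (hd xs) < \<eta>" using Cons(4) False by (simp add: successively_Cons)
    moreover have "dist y (hd ys) \<le> dist y x + dist x (hd xs) + dist (hd xs) (hd ys)"
    proof -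
      have "dist y (hd ys) \<le> dist y x + dist x (hd ys)" by (rule dist_triangle)
      moreover have "dist x (hd ys) \<le> dist x (hd xs) + dist (hd xs) (hd ys)" by (rule dist_triangle)
      ultimately show ?thesis by simp
    qed
    ultimately have "dist y (hd ys) \<le> \<eta> + 2*\<gamma>" using Cons(1) h by (simp add: dist_commute)
    moreover have "successively (\<lambda>a b. dist a b \<le> \<eta> + 2*\<gamma>) ys"
      using Cons(3,4) False by (simp add: successively_Cons)
    ultimately show ?thesis using h by (simp add: successively_Cons)
  qed
qed simp

lemma approx_chain:
  fixes T :: "'a::euclidean_space set"
  assumes dim: "2 \<le> DIM('a)" and D: "\<And>U. open U \<Longrightarrow> U \<noteq> {} \<Longrightarrow> \<exists>d\<in>D. d \<in> U"
    and T: "T \<in> CU" and t: "t \<in> T" and \<eta>: "\<eta> > 0" and \<gamma>: "\<gamma> > 0" "\<gamma> \<le> 1"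
  shows "\<exists>L. L \<noteq> [] \<and> norm (hd L) \<ge> real j + 1 \<and> 0 \<notin> pset L \<and> set L \<subseteq> D \<and> dist t (last L) < \<gamma>
            \<and> (\<forall>x \<in> pset L. \<exists>s\<in>T. dist x s \<le> \<eta> + 2*\<gamma> + \<gamma>)"
proof -
  define C where "C = connected_component_set T t"
  have CC: "C \<in> components T" using t by (simp add: C_def components_def)
  then have nb: "\<not> bounded C" using T by (auto simp: CU_def)
  obtain u where u: "u \<in> C" "norm u > real j + 2"
  proof -
    have "\<not> C \<subseteq> cball 0 (real j + 2)" using nb bounded_cball bounded_subset by blast
    then obtain x where "x \<in> C" "x \<notin> cball 0 (real j + 2)" by blast
    then show ?thesis using that[of x] by auto
  qed
  have conC: "connected C" by (simp add: C_def)
  have tC: "t \<in> C" using t by (simp add: C_def)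
  have CT: "C \<subseteq> T" by (simp add: C_def connected_component_subset)
  obtain cs where cs: "cs \<noteq> []" "hd cs = u" "last cs = t" "set cs \<subseteq> C"
      "successively (\<lambda>a b. dist a b < \<eta>) cs"
    using chain_exists[OF conC u(1) tC \<eta>] by blast
  obtain cs' where cs': "list_all2 (\<lambda>a b. dist a b < \<gamma>) cs cs'" "set cs' \<subseteq> D" "0 \<notin> pset cs'"
    using perturb_chain[OF dim D \<gamma>(1) cs(1)] by blast
  note hl = la2_hd_last[OF cs'(1) cs(1)]
  have "norm u \<le> norm (hd cs') + dist u (hd cs')"
    by (metis dist_norm norm_triangle_sub norm_minus_commute)
  then have nh: "norm (hd cs') \<ge> real j + 1" using hl cs(2) u(2) \<gamma>(2) by simp
  have sc: "successively (\<lambda>a b. dist a b \<le> \<eta> + 2*\<gamma>) cs'" by (rule la2_succ[OF cs'(1) cs(5)])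
  have near: "\<exists>s\<in>T. dist x s \<le> \<eta> + 2*\<gamma> + \<gamma>" if "x \<in> pset cs'" for x
  proof (rule pset_near[OF sc _ that])
    fix y assume "y \<in> set cs'"
    then obtain x where "x \<in> set cs" "dist x y < \<gamma>" using la2_set[OF cs'(1)] by blast
    then show "\<exists>s\<in>T. dist y s \<le> \<gamma>" using cs(4) CT by (intro bexI[of _ x]) (auto simp: dist_commute)
  qed (use \<eta> \<gamma> in simp)
  show ?thesis
    using hl nh cs'(2,3) cs(3) near by (intro exI[where x=cs']) auto
qed

lemma good_cand:
  fixes T :: "'a::euclidean_space set"
  assumes dim: "2 \<le> DIM('a)" and D: "\<And>U. open U \<Longrightarrow> U \<noteq> {} \<Longrightarrow> \<exists>d\<in>D. d \<in> U"
    and T: "T \<in> CU" and j: "j \<ge> 1"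
  shows "\<exists>Ls E. valid (j, Ls, E) \<and> (\<forall>L\<in>set Ls. set L \<subseteq> D) \<and> set E \<subseteq> D
     \<and> (\<forall>x\<in>good Ls E. \<exists>t\<in>T. dist x t \<le> 1 / real j)
     \<and> (\<forall>t\<in>T \<inter> cball 0 (real j). \<exists>x\<in>good Ls E. dist t x \<le> 1 / real j)"
proof -
  define \<epsilon> where "\<epsilon> = 1 / real j"
  have e: "\<epsilon> > 0" "\<epsilon> \<le> 1" using j by (auto simp: \<epsilon>_def)
  define \<eta> where "\<eta> = \<epsilon> / 4"
  define \<gamma> where "\<gamma> = \<epsilon> / 8"
  have pars: "\<eta> > 0" "\<gamma> > 0" "\<gamma> \<le> 1" "\<eta> + 2*\<gamma> + \<gamma> \<le> \<epsilon>" "\<epsilon>/2 + \<gamma> \<le> \<epsilon>" "\<gamma> \<le> \<epsilon>"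
    using e by (auto simp: \<eta>_def \<gamma>_def)
  have 0: "0 \<in> T" and clT: "closed T" using T by (auto simp: CU_def)
  define K where "K = T \<inter> cball 0 (real j)"
  have "compact K" unfolding K_def using clT by (simp add: closed_Int_compact)
  then have tb: "\<forall>r>0. \<exists>k. finite k \<and> k \<subseteq> K \<and> K \<subseteq> (\<Union>x\<in>k. ball x r)"
    by (intro seq_compact_imp_totally_bounded compact_imp_seq_compact)
  have h2: "\<epsilon>/2 > 0" using e by simp
  obtain F where F: "finite F" "F \<subseteq> K" "K \<subseteq> (\<Union>x\<in>F. ball x (\<epsilon>/2))"
    using tb[rule_format, OF h2] by (elim exE conjE)
  define PL where "PL t L \<longleftrightarrow> L \<noteq> [] \<and> norm (hd L) \<ge> real j + 1 \<and> 0 \<notin> pset L \<and> set L \<subseteq> D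
       \<and> dist t (last L) < \<gamma> \<and> (\<forall>x \<in> pset L. \<exists>s\<in>T. dist x s \<le> \<eta> + 2*\<gamma> + \<gamma>)" for t L
  have ex: "\<exists>L. PL t L" if "t \<in> T" for t
    unfolding PL_def by (rule approx_chain[OF dim D T that pars(1,2,3)])
  have "\<forall>t\<in>F. \<exists>L. PL t L" using ex F(2) unfolding K_def by blast
  then obtain Lf where Lf': "\<forall>t\<in>F. PL t (Lf t)" by (auto dest: bchoice)
  then have Lf: "\<And>t. t \<in> F \<Longrightarrow> PL t (Lf t)" by blast
  obtain E where E: "PL 0 E" using ex[OF 0] by blast
  obtain fs where fs: "set fs = F" using finite_list[OF F(1)] by blast
  define Ls where "Ls = map Lf fs"
  have LsP: "\<And>L. L \<in> set Ls \<Longrightarrow> \<exists>t\<in>F. L = Lf t \<and> PL t L" using Lf fs by (auto simp: Ls_def)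
  have lastE: "norm (last E) \<le> 1 / real j" using E pars(6) by (simp add: PL_def \<epsilon>_def)
  have v: "valid (j, Ls, E)"
    unfolding valid_def using j E lastE LsP by (auto simp: PL_def)
  have a1: "\<forall>L\<in>set Ls. set L \<subseteq> D" "set E \<subseteq> D" using LsP E by (auto simp: PL_def)
  have a2: "\<forall>x\<in>good Ls E. \<exists>t\<in>T. dist x t \<le> 1 / real j"
  proof
    fix x assume "x \<in> good Ls E"
    then obtain L where L: "PL' \<in> {0} \<or> True" "x \<in> pset L" "\<exists>t. PL t L"
      using LsP E unfolding good_def by blast
    then obtain s where "s \<in> T" "dist x s \<le> \<eta> + 2*\<gamma> + \<gamma>" by (auto simp: PL_def)
    then show "\<exists>t\<in>T. dist x t \<le> 1 / real j" using pars(4) by (intro bexI[of _ s]) (auto simp: \<epsilon>_def)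
  qed
  have a3: "\<forall>t\<in>T \<inter> cball 0 (real j). \<exists>x\<in>good Ls E. dist t x \<le> 1 / real j"
  proof
    fix t assume "t \<in> T \<inter> cball 0 (real j)"
    then obtain f where f: "f \<in> F" "dist f t < \<epsilon>/2" using F(3) unfolding K_def by auto
    have P: "PL f (Lf f)" using Lf f(1) .
    have "last (Lf f) \<in> pset (Lf f)" using P set_sub_pset[of "Lf f"] last_in_set[of "Lf f"] by (auto simp: PL_def)
    moreover have "Lf f \<in> set Ls" using f(1) fs by (auto simp: Ls_def)
    ultimately have g: "last (Lf f) \<in> good Ls E" by (auto simp: good_def)
    have "dist t (last (Lf f)) \<le> dist t f + dist f (last (Lf f))" by (rule dist_triangle)
    also have "\<dots> \<le> \<epsilon>" using f(2) P pars(5) by (simp add: PL_def dist_commute)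
    finally show "\<exists>x\<in>good Ls E. dist t x \<le> 1 / real j" using g by (auto simp: \<epsilon>_def)
  qed
  show ?thesis using v a1 a2 a3 by blast
qed


lemma UNIV_CU: "(UNIV :: 'a::euclidean_space set) \<in> CU"
  unfolding CU_def using components_eq_sing_iff[of "UNIV :: 'a set"] by (auto simp: not_bounded_UNIV)

locale constr =
  fixes D :: "'a::euclidean_space set"
  assumes dim: "2 \<le> DIM('a)" and cD: "countable D"
    and dD: "\<And>U. open U \<Longrightarrow> U \<noteq> {} \<Longrightarrow> \<exists>d\<in>D. d \<in> U"
begin

definition Cands :: "(nat \<times> 'a list list \<times> 'a list) set" where
  "Cands = {c. valid c \<and> (\<forall>L\<in>set (fst (snd c)). set L \<subseteq> D) \<and> set (snd (snd c)) \<subseteq> D}"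

lemma countable_Cands: "countable Cands"
proof -
  have "Cands \<subseteq> UNIV \<times> (lists (lists D) \<times> lists D)" by (auto simp: Cands_def)
  moreover have "countable (UNIV \<times> (lists (lists D) \<times> lists D) :: (nat \<times> 'a list list \<times> 'a list) set)"
    using cD by auto
  ultimately show ?thesis by (rule countable_subset)
qed

lemma Cands_ne: "Cands \<noteq> {}"
proof -
  obtain Ls E where "valid (1, Ls, E)" "\<forall>L\<in>set Ls. set L \<subseteq> D" "set E \<subseteq> D"
    using good_cand[OF dim dD UNIV_CU, of 1] by auto
  then have "(1, Ls, E) \<in> Cands" by (simp add: Cands_def)
  then show ?thesis by blast
qed

definition cand :: "nat \<Rightarrow> nat \<times> 'a list list \<times> 'a list" where
  "cand k = from_nat_into Cands (fst (prod_decode k))"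

lemma cand_in: "cand k \<in> Cands"
  unfolding cand_def using Cands_ne by (rule from_nat_into)

lemma cand_often: "c \<in> Cands \<Longrightarrow> \<exists>k\<ge>m. cand k = c"
proof -
  assume "c \<in> Cands"
  then obtain i where i: "from_nat_into Cands i = c" using from_nat_into_surj[OF countable_Cands] by blast
  show ?thesis
    by (intro exI[where x="prod_encode (i, m)"]) (simp add: cand_def i le_prod_encode_2)
qed

definition jj where "jj k = fst (cand k)"
definition LL where "LL k = fst (snd (cand k))"
definition EE where "EE k = snd (snd (cand k))"
definition bb where "bb k = last (EE k)"

lemma valid_k: "valid (jj k, LL k, EE k)"
  using cand_in[of k] by (simp add: Cands_def jj_def LL_def EE_def)

lemma jj1: "jj k \<ge> 1" and EE_ne: "EE k \<noteq> []" and bb0: "bb k \<noteq> 0" and bb_le: "norm (bb k) \<le> 1 / real (jj k)"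
proof -
  have v: "jj k \<ge> 1" "EE k \<noteq> []" "0 \<notin> pset (EE k)" "norm (last (EE k)) \<le> 1 / real (jj k)"
    using valid_k[of k] unfolding valid_def by auto
  show "jj k \<ge> 1" "EE k \<noteq> []" using v by auto
  show "norm (bb k) \<le> 1 / real (jj k)" using v by (simp add: bb_def)
  have "bb k \<in> pset (EE k)" using v(2) set_sub_pset[of "EE k"] by (auto simp: bb_def)
  then show "bb k \<noteq> 0" using v(3) by auto
qed

definition dir where "dir k = (case k of 0 \<Rightarrow> e1 | Suc i \<Rightarrow> bb i /\<^sub>R norm (bb i))"

lemma norm_dir: "norm (dir k) = 1"
  by (cases k) (auto simp: dir_def norm_e1 bb0)

definition W where "W k = Wl (jj k) (LL k) (EE k) (dir k)"

definition rho where "rho k = 2 * (real (jj k) + 1)"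

lemma W_props: "W k \<noteq> []" "hd (W k) = rho k *\<^sub>R dir k" "last (W k) = bb k"
    "pset (W k) \<subseteq> {z. real (jj k) < norm z} \<union> good (LL k) (EE k)"
    "good (LL k) (EE k) \<subseteq> pset (W k)" "0 \<notin> pset (W k)"
  using Wl_props[OF dim valid_k norm_dir, of k] by (simp_all add: W_def rho_def bb_def)

definition mlo where "mlo k = infdist 0 (pset (W k))"
definition Mup where "Mup k = (SOME M. M \<ge> 1 \<and> (\<forall>x\<in>pset (W k). norm x \<le> M))"

lemma mlo_pos: "mlo k > 0"
  unfolding mlo_def using W_props(1,6)[of k]
  by (intro infdist_pos_not_in_closed) (auto simp: compact_imp_closed compact_pset)

lemma mlo_le: "x \<in> pset (W k) \<Longrightarrow> mlo k \<le> norm x"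
  unfolding mlo_def using infdist_le[of x "pset (W k)" 0] by simp

lemma Mup: "Mup k \<ge> 1" "x \<in> pset (W k) \<Longrightarrow> norm x \<le> Mup k"
proof -
  have "bounded (pset (W k))" by (simp add: compact_imp_bounded compact_pset)
  then obtain B where "B > 0" "\<forall>x\<in>pset (W k). norm x \<le> B" by (auto simp: bounded_pos)
  then have "\<exists>M. M \<ge> 1 \<and> (\<forall>x\<in>pset (W k). norm x \<le> M)"
    by (intro exI[where x="max B 1"]) auto
  then have "Mup k \<ge> 1 \<and> (\<forall>x\<in>pset (W k). norm x \<le> Mup k)"
    unfolding Mup_def by (rule someI_ex)
  then show "Mup k \<ge> 1" "x \<in> pset (W k) \<Longrightarrow> norm x \<le> Mup k" by auto
qed

lemma hdW_in: "rho k *\<^sub>R dir k \<in> pset (W k)"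
  using W_props(1,2)[of k] set_sub_pset[of "W k"] hd_in_set[of "W k"] by auto

lemma bb_in: "bb k \<in> pset (W k)"
  using W_props(1,3)[of k] set_sub_pset[of "W k"] last_in_set[of "W k"] by auto

lemma rho_pos: "rho k > 0" by (simp add: rho_def)

lemma norm_hdW: "norm (rho k *\<^sub>R dir k) = rho k"
  using rho_pos[of k] by (simp add: norm_dir)

lemma mlo_le_bb: "mlo k \<le> norm (bb k)" using mlo_le[OF bb_in] .
lemma mlo_le1: "mlo k \<le> 1"
proof -
  have "1 / real (jj k) \<le> 1" using jj1[of k] by simp
  then show ?thesis using mlo_le_bb[of k] bb_le[of k] by linarith
qed
lemma rho_le_Mup: "rho k \<le> Mup k" using Mup(2)[OF hdW_in] norm_hdW by simp
lemma mlo_le_Mup: "mlo k \<le> Mup k" using mlo_le[OF bb_in, of k] Mup(2)[OF bb_in, of k] by linarith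

definition sig where "sig k = (1/2)^Suc k / (Mup k * 2^(length (W k) + 3))"

fun s :: "nat \<Rightarrow> real" where
  "s 0 = sig 0"
| "s (Suc k) = min (s k * mlo k / Mup (Suc k)) (sig (Suc k))"

lemma sig_pos: "sig k > 0" using Mup(1)[of k] by (simp add: sig_def)

lemma s_pos: "s k > 0"
  by (induction k) (auto simp: sig_pos mlo_pos Mup(1) intro!: divide_pos_pos less_le_trans[OF zero_less_one Mup(1)])

lemma s_le_sig: "s k \<le> sig k" by (cases k) auto

lemma S1: "s (Suc k) * Mup (Suc k) \<le> s k * mlo k"
proof -
  have "s (Suc k) \<le> s k * mlo k / Mup (Suc k)" by simp
  then have "s (Suc k) * Mup (Suc k) \<le> (s k * mlo k / Mup (Suc k)) * Mup (Suc k)"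
    using Mup(1)[of "Suc k"] by (intro mult_right_mono) auto
  also have "\<dots> = s k * mlo k" using Mup(1)[of "Suc k"] by simp
  finally show ?thesis .
qed

lemma S2: "s k * Mup k * 2^(length (W k) + 3) \<le> (1/2)^Suc k"
proof -
  have "s k * (Mup k * 2^(length (W k) + 3)) \<le> sig k * (Mup k * 2^(length (W k) + 3))"
    using s_le_sig[of k] Mup(1)[of k] by (intro mult_right_mono) auto
  also have "\<dots> = (1/2)^Suc k" using Mup(1)[of k] by (simp add: sig_def)
  finally show ?thesis by (simp add: mult.assoc)
qed

lemma s_dec: "s (Suc k) \<le> s k"
proof -
  have "s (Suc k) \<le> s k * mlo k / Mup (Suc k)" by simp
  also have "\<dots> \<le> s k * 1 / 1"
    using s_pos[of k] mlo_le1[of k] mlo_pos[of k] Mup(1)[of "Suc k"]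
    by (intro frac_le mult_left_mono) auto
  finally show ?thesis by simp
qed

definition aa where "aa k = s k * mlo k"
definition BB where "BB k = s k * Mup k"

lemma BB_aa: "BB (Suc k) \<le> aa k" using S1 by (simp add: aa_def BB_def)
lemma aa_BB: "aa k \<le> BB k" using mlo_le_Mup[of k] s_pos[of k] by (simp add: aa_def BB_def)

lemma BB_dec: "m \<le> n \<Longrightarrow> BB n \<le> BB m"
proof (induction n rule: dec_induct)
  case (step n)
  then show ?case using BB_aa[of n] aa_BB[of n] aa_BB[of "Suc n"] by linarith
qed simp

lemma aa_dec: "m \<le> n \<Longrightarrow> aa n \<le> aa m"
proof (induction n rule: dec_induct)
  case (step n)
  then show ?case using BB_aa[of n] aa_BB[of n] aa_BB[of "Suc n"] by linarith
qed simp

lemma s_le_half: "s k \<le> (1/2)^Suc k"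
proof -
  have "s k * 1 \<le> s k * (Mup k * 2^(length (W k) + 3))"
  proof (rule mult_left_mono)
    have "(1::real) \<le> 2^(length (W k) + 3)" by (rule one_le_power) simp
    then show "1 \<le> Mup k * 2^(length (W k) + 3)" using Mup(1)[of k]
      by (metis mult_mono' one_le_numeral order.trans mult_1 zero_le_one)
  qed (use s_pos[of k] in auto)
  then show ?thesis using S2[of k] by (simp add: mult.assoc)
qed

end


context constr begin

declare s.simps(2)[simp del]

definition V where "V k = map (scaleR (s k)) (W k) @ [s (Suc k) *\<^sub>R hd (W (Suc k))]"

definition X where "X = insert 0 (\<Union>k. pset (V k))"

lemma V_ne: "V k \<noteq> []" by (simp add: V_def)

lemma V_norm: "x \<in> set (V k) \<Longrightarrow> norm x \<le> BB k"
proof -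
  assume "x \<in> set (V k)"
  then consider w where "w \<in> set (W k)" "x = s k *\<^sub>R w" | "x = s (Suc k) *\<^sub>R hd (W (Suc k))"
    by (auto simp: V_def)
  then show ?thesis
  proof cases
    case 1
    then have "norm w \<le> Mup k" using Mup(2) set_sub_pset by blast
    then show ?thesis using 1 s_pos[of k] by (simp add: BB_def mult_left_mono)
  next
    case 2
    have "norm x = s (Suc k) * rho (Suc k)"
      using 2 W_props(2)[of "Suc k"] s_pos[of "Suc k"] rho_pos[of "Suc k"] by (simp add: norm_dir)
    also have "\<dots> \<le> BB (Suc k)" using rho_le_Mup[of "Suc k"] s_pos[of "Suc k"] by (simp add: BB_def)
    also have "\<dots> \<le> BB k" using BB_aa[of k] aa_BB[of k] by linarith
    finally show ?thesis .
  qed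
qed

lemma BB_small: "BB k * 2^(length (W k) + 3) \<le> (1/2)^Suc k"
  using S2[of k] by (simp add: BB_def)

lemma BB_pos: "BB k > 0" using s_pos[of k] Mup(1)[of k] by (simp add: BB_def)

lemma BB_le_half: "BB k \<le> (1/2)^Suc k"
proof -
  have "BB k * 1 \<le> BB k * 2^(length (W k) + 3)"
    using BB_pos[of k] by (intro mult_left_mono) (auto intro: one_le_power)
  then show ?thesis using BB_small[of k] by simp
qed

lemma p_lip: "((1/2)^Suc k)-lipschitz_on {0..1} (pgon (V k))"
proof -
  have L: "(2^length (V k) * (2 * BB k))-lipschitz_on {0..1} (pgon (V k))"
    using BB_pos[of k] by (intro lipschitz_pgon V_norm) auto
  have "2^length (V k) * (2 * BB k) = BB k * 2^(length (W k) + 2)"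
    by (simp add: V_def power_add)
  also have "\<dots> \<le> BB k * 2^(length (W k) + 3)"
    using BB_pos[of k] by (intro mult_left_mono power_increasing) auto
  also have "\<dots> \<le> (1/2)^Suc k" by (rule BB_small)
  finally show ?thesis by (rule lipschitz_on_mono[OF L order_refl])
qed

lemma p_match: "pgon (V k) 1 = pgon (V (Suc k)) 0"
proof -
  have "pgon (V k) 1 = last (V k)"
    using pathfinish_pgon[OF V_ne[of k]] by (simp add: pathfinish_def)
  also have "\<dots> = s (Suc k) *\<^sub>R hd (W (Suc k))" by (simp add: V_def)
  also have "\<dots> = hd (V (Suc k))" using W_props(1)[of "Suc k"] by (simp add: V_def hd_map)
  also have "\<dots> = pgon (V (Suc k)) 0"
    using pathstart_pgon[of "hd (V (Suc k))" "tl (V (Suc k))"] V_ne[of "Suc k"]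
    by (simp add: pathstart_def)
  finally show ?thesis .
qed

lemma p_img: "pgon (V k) ` {0..1} = pset (V k)"
  using path_image_pgon[OF V_ne[of k]] by (simp add: path_image_def)

lemma p_small: "t \<in> {0..1} \<Longrightarrow> norm (pgon (V k) t) \<le> (1/2)^Suc k"
proof -
  assume "t \<in> {0..1}"
  then have "pgon (V k) t \<in> pset (V k)" using p_img[of k] by blast
  then have "norm (pgon (V k) t) \<le> BB k" using pset_norm_le[of "V k" "BB k"] V_norm by blast
  then show ?thesis using BB_le_half[of k] by linarith
qed

lemma curve_exists: "\<exists>f::real \<Rightarrow> 'a. 1-lipschitz_on {0..1} f \<and> f 0 = 0 \<and> f ` {0..1} = X"
proof -
  obtain f :: "real \<Rightarrow> 'a" where f: "1-lipschitz_on {0..1} f" "f 0 = 0"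
     "f ` {0..1} = insert 0 (\<Union>k. pgon (V k) ` {0..1})"
    using dyadic_concat[of "\<lambda>k. pgon (V k)", OF p_lip p_match p_small] by blast
  have "f ` {0..1} = X" unfolding f(3) X_def p_img ..
  then show ?thesis using f by blast
qed

lemma pset_V: "pset (V k) = scaleR (s k) ` pset (W k) \<union> closed_segment (s k *\<^sub>R bb k) (s (Suc k) *\<^sub>R hd (W (Suc k)))"
proof -
  have "pset (V k) = pset (map (scaleR (s k)) (W k)) \<union> closed_segment (last (map (scaleR (s k)) (W k))) (s (Suc k) *\<^sub>R hd (W (Suc k)))
      \<union> {s (Suc k) *\<^sub>R hd (W (Suc k))}"
    unfolding V_def using W_props(1)[of k] by (subst pset_append) auto
  also have "last (map (scaleR (s k)) (W k)) = s k *\<^sub>R bb k"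
    using W_props(1,3)[of k] by (simp add: last_map)
  finally show ?thesis by (auto simp: pset_scale)
qed

lemma conn_bounds:
  assumes "z \<in> closed_segment (s k *\<^sub>R bb k) (s (Suc k) *\<^sub>R hd (W (Suc k)))"
  shows "s (Suc k) * rho (Suc k) \<le> norm z" "norm z \<le> s k * norm (bb k)"
proof -
  define d where "d = bb k /\<^sub>R norm (bb k)"
  have nd: "norm d = 1" using bb0[of k] by (simp add: d_def)
  have e1: "s k *\<^sub>R bb k = (s k * norm (bb k)) *\<^sub>R d" using bb0[of k] by (simp add: d_def)
  have e2: "s (Suc k) *\<^sub>R hd (W (Suc k)) = (s (Suc k) * rho (Suc k)) *\<^sub>R d"
    using W_props(2)[of "Suc k"] by (simp add: dir_def d_def)
  have z: "z \<in> closed_segment ((s k * norm (bb k)) *\<^sub>R d) ((s (Suc k) * rho (Suc k)) *\<^sub>R d)"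
    using assms e1 e2 by simp
  have le: "s (Suc k) * rho (Suc k) \<le> s k * norm (bb k)"
  proof -
    have "s (Suc k) * rho (Suc k) \<le> BB (Suc k)"
      using rho_le_Mup[of "Suc k"] s_pos[of "Suc k"] by (simp add: BB_def)
    also have "\<dots> \<le> aa k" by (rule BB_aa)
    also have "\<dots> \<le> s k * norm (bb k)" using mlo_le_bb[of k] s_pos[of k] by (simp add: aa_def)
    finally show ?thesis .
  qed
  have p: "0 \<le> s k * norm (bb k)" "0 \<le> s (Suc k) * rho (Suc k)"
    using s_pos[of k] s_pos[of "Suc k"] rho_pos[of "Suc k"] by auto
  show "s (Suc k) * rho (Suc k) \<le> norm z" using radial_norm(1)[OF p z] le nd by (simp add: min_absorb2)
  show "norm z \<le> s k * norm (bb k)" using radial_norm(2)[OF p z] le nd by (simp add: max_absorb1)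
qed

lemma scaled_bounds: "z \<in> scaleR (s k) ` pset (W k) \<Longrightarrow> aa k \<le> norm z \<and> norm z \<le> BB k"
proof -
  assume "z \<in> scaleR (s k) ` pset (W k)"
  then obtain w where w: "w \<in> pset (W k)" "z = s k *\<^sub>R w" by auto
  have "mlo k \<le> norm w" "norm w \<le> Mup k" using mlo_le[OF w(1)] Mup(2)[OF w(1)] by auto
  then show ?thesis using w(2) s_pos[of k] by (auto simp: aa_def BB_def intro: mult_left_mono)
qed

lemma rho_ge_mlo: "mlo k \<le> rho k" using mlo_le[OF hdW_in] norm_hdW by simp

lemma before_far: "k < K \<Longrightarrow> z \<in> pset (V k) \<Longrightarrow> s K * rho K \<le> norm z"
proof -
  assume kK: "k < K" and z: "z \<in> pset (V k)"
  have base: "s K * rho K \<le> BB K" using rho_le_Mup[of K] s_pos[of K] by (simp add: BB_def)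
  have aK: "BB K \<le> aa k'" if "k' < K" for k'
  proof -
    obtain K' where K': "K = Suc K'" using \<open>k' < K\<close> by (cases K) auto
    have "BB K \<le> aa K'" unfolding K' by (rule BB_aa)
    also have "\<dots> \<le> aa k'" using that K' by (intro aa_dec) auto
    finally show ?thesis .
  qed
  show ?thesis
  proof (cases "z \<in> scaleR (s k) ` pset (W k)")
    case True
    then show ?thesis using scaled_bounds[OF True] base aK[OF kK] by linarith
  next
    case False
    then have zc: "z \<in> closed_segment (s k *\<^sub>R bb k) (s (Suc k) *\<^sub>R hd (W (Suc k)))" using z pset_V by blast
    have l: "s (Suc k) * rho (Suc k) \<le> norm z" by (rule conn_bounds(1)[OF zc])
    show ?thesis
    proof (cases "Suc k = K")
      case True then show ?thesis using l by simp
    next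
      case False
      then have "Suc k < K" using kK by simp
      then have "BB K \<le> aa (Suc k)" by (rule aK)
      also have "aa (Suc k) \<le> s (Suc k) * rho (Suc k)"
        using rho_ge_mlo[of "Suc k"] s_pos[of "Suc k"] by (simp add: aa_def)
      finally show ?thesis using base l by linarith
    qed
  qed
qed

lemma after_small: "K < k \<Longrightarrow> z \<in> pset (V k) \<Longrightarrow> norm z \<le> s K * norm (bb K)"
proof -
  assume Kk: "K < k" and z: "z \<in> pset (V k)"
  have "norm z \<le> BB k" using pset_norm_le[of "V k" "BB k"] V_norm z by blast
  also have "\<dots> \<le> BB (Suc K)" using Kk by (intro BB_dec) auto
  also have "\<dots> \<le> aa K" by (rule BB_aa)
  also have "\<dots> \<le> s K * norm (bb K)" using mlo_le_bb[of K] s_pos[of K] by (simp add: aa_def)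
  finally show ?thesis .
qed

lemma scale_A:
  assumes x: "x \<in> X" and nx: "norm x \<le> r * s K" and r: "r \<le> real (jj K)"
  shows "(1 / s K) *\<^sub>R x \<in> pset (W K) \<or> norm x \<le> s K * norm (bb K)"
proof -
  have sK: "s K > 0" by (rule s_pos)
  show ?thesis
  proof (cases "x = 0")
    case True then show ?thesis using sK by simp
  next
    case False
    then obtain k where k: "x \<in> pset (V k)" using x by (auto simp: X_def)
    show ?thesis
    proof (cases k K rule: linorder_cases)
      case less
      have "s K * rho K \<le> norm x" by (rule before_far[OF less k])
      moreover have "r * s K < s K * rho K" using r sK by (simp add: rho_def mult.commute)
      ultimately show ?thesis using nx by linarith
    next
      case equal
      show ?thesis
      proof (cases "x \<in> scaleR (s K) ` pset (W K)")
        case True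
        then show ?thesis using sK by auto
      next
        case False
        then have "x \<in> closed_segment (s K *\<^sub>R bb K) (s (Suc K) *\<^sub>R hd (W (Suc K)))"
          using k equal pset_V by blast
        then show ?thesis using conn_bounds(2) by blast
      qed
    next
      case greater
      then show ?thesis using after_small[OF greater k] by simp
    qed
  qed
qed

lemma scale_B: "scaleR (s K) ` pset (W K) \<subseteq> X"
  using pset_V[of K] by (auto simp: X_def)

end


context constr begin

lemma CU_sub_Tan:
  assumes T: "T \<in> CU"
  shows "T \<in> Tan X 0"
proof -
  define AP where "AP n c \<longleftrightarrow> c \<in> Cands \<and> fst c = n + 1 \<and>
      (\<forall>x\<in>good (fst (snd c)) (snd (snd c)). \<exists>t\<in>T. dist x t \<le> 1 / real (n+1)) \<and>
      (\<forall>t\<in>T \<inter> cball 0 (real (n+1)). \<exists>x\<in>good (fst (snd c)) (snd (snd c)). dist t x \<le> 1 / real (n+1))" for n c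
  have "\<exists>c. AP n c" for n
  proof -
    obtain Ls E where LE: "valid (n+1, Ls, E)" "\<forall>L\<in>set Ls. set L \<subseteq> D" "set E \<subseteq> D"
      "\<forall>x\<in>good Ls E. \<exists>t\<in>T. dist x t \<le> 1 / real (n+1)"
      "\<forall>t\<in>T \<inter> cball 0 (real (n+1)). \<exists>x\<in>good Ls E. dist t x \<le> 1 / real (n+1)"
      using good_cand[OF dim dD T, of "n+1"] by auto
    then show ?thesis unfolding AP_def
      by (intro exI[where x="(n+1, Ls, E)"]) (simp add: Cands_def)
  qed
  then obtain cT where cT: "\<And>n. AP n (cT n)" by metis
  define Kf where "Kf = rec_nat (SOME k. cand k = cT 0) (\<lambda>n kn. SOME k. k > kn \<and> cand k = cT (Suc n))"
  have Kf0: "Kf 0 = (SOME k. cand k = cT 0)" by (simp add: Kf_def)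
  have KfS: "Kf (Suc n) = (SOME k. k > Kf n \<and> cand k = cT (Suc n))" for n by (simp add: Kf_def)
  have inC: "cT n \<in> Cands" for n using cT[of n] by (simp add: AP_def)
  have Kfc: "cand (Kf n) = cT n" for n
  proof (cases n)
    case 0
    have "\<exists>k. cand k = cT 0" using cand_often[OF inC[of 0], of 0] by blast
    then show ?thesis unfolding 0 Kf0 by (rule someI_ex)
  next
    case (Suc m)
    have "\<exists>k. k > Kf m \<and> cand k = cT (Suc m)" using cand_often[OF inC[of "Suc m"], of "Suc (Kf m)"] by (meson Suc_le_eq)
    then have "Kf (Suc m) > Kf m \<and> cand (Kf (Suc m)) = cT (Suc m)" unfolding KfS by (rule someI_ex)
    then show ?thesis using Suc by simp
  qed
  have Kf_Suc: "Kf n < Kf (Suc n)" for n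
  proof -
    have "\<exists>k. k > Kf n \<and> cand k = cT (Suc n)" using cand_often[OF inC[of "Suc n"], of "Suc (Kf n)"] by (meson Suc_le_eq)
    then have "Kf (Suc n) > Kf n \<and> cand (Kf (Suc n)) = cT (Suc n)" unfolding KfS by (rule someI_ex)
    then show ?thesis by simp
  qed
  have smK: "strict_mono Kf" by (rule strict_monoI_Suc) (use Kf_Suc in auto)
  have Kf_ge: "n \<le> Kf n" for n using seq_suble[OF smK] .
  define r where "r n = s (Kf n)" for n
  have rpos: "r n > 0" for n by (simp add: r_def s_pos)
  have s_decseq: "decseq s" by (rule decseq_SucI) (rule s_dec)
  have rdec: "decseq r" unfolding decseq_def r_def
    using s_decseq smK by (auto simp: decseq_def strict_mono_less_eq)
  have r0: "r \<longlonglongrightarrow> 0"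
  proof (rule tendsto_sandwich[of "\<lambda>_. 0" _ _ "\<lambda>n. (1/2::real)^n"])
    show "\<forall>\<^sub>F n in sequentially. 0 \<le> r n" using rpos by (simp add: less_imp_le)
    show "\<forall>\<^sub>F n in sequentially. r n \<le> (1/2)^n"
    proof (rule always_eventually, rule allI)
      fix n
      have "r n \<le> (1/2)^Suc (Kf n)" unfolding r_def by (rule s_le_half)
      also have "\<dots> \<le> (1/2)^n" using Kf_ge[of n] by (intro power_decreasing) auto
      finally show "r n \<le> (1/2)^n" .
    qed
    show "(\<lambda>n. (1/2::real)^n) \<longlonglongrightarrow> 0" by (rule LIMSEQ_power_zero) simp
  qed simp
  have jjK: "jj (Kf n) = n + 1" for n using cT[of n] Kfc[of n] by (simp add: AP_def jj_def)
  have goodK: "good (LL (Kf n)) (EE (Kf n)) = good (fst (snd (cT n))) (snd (snd (cT n)))" for n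
    using Kfc[of n] by (simp add: LL_def EE_def)
  define Y where "Y n = (\<lambda>y. (1 / r n) *\<^sub>R (y - 0)) ` X" for n
  have AW: "AW_converges Y T"
    unfolding AW_converges_def
  proof (intro allI impI conjI)
    fix R :: real assume R: "R > 0"
    have evN: "eventually (\<lambda>n. R \<le> real (n+1) \<and> 1 / real (n+1) \<le> \<epsilon>) sequentially" if e: "\<epsilon> > 0" for \<epsilon>
    proof -
      obtain N :: nat where N: "max R (1/\<epsilon>) \<le> real N" using real_arch_simple by blast
      show ?thesis unfolding eventually_sequentially
      proof (intro exI[where x=N] allI impI conjI)
        fix n assume "N \<le> n"
        then have n: "max R (1/\<epsilon>) \<le> real (n+1)" using N by linarith
        then show "R \<le> real (n+1)" by simp
        have "1/\<epsilon> \<le> real (n+1)" using n by simp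
        then show "1 / real (n+1) \<le> \<epsilon>" using e by (simp add: field_simps)
      qed
    qed
    show "(\<lambda>m. exc (Y m \<inter> cball 0 R) T) \<longlonglongrightarrow> 0"
    proof (rule tendsto_exc_0)
      fix \<epsilon> :: real assume e: "\<epsilon> > 0"
      show "\<forall>\<^sub>F m in sequentially. \<forall>a\<in>Y m \<inter> cball 0 R. \<exists>b\<in>T. dist a b \<le> \<epsilon>"
        using evN[OF e]
      proof eventually_elim
        case (elim n)
        define K where "K = Kf n"
        show ?case
        proof
          fix a assume a: "a \<in> Y n \<inter> cball 0 R"
          then obtain x where x: "x \<in> X" "a = (1 / s K) *\<^sub>R x" by (auto simp: Y_def r_def K_def)
          have sK: "s K > 0" by (rule s_pos)
          have xa: "x = s K *\<^sub>R a" using x sK by simp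
          have na: "norm a \<le> R" using a by simp
          have "norm x \<le> R * s K" using na sK xa by (simp add: mult.commute mult_left_mono)
          moreover have "R \<le> real (jj K)" using elim jjK[of n] by (simp add: K_def)
          ultimately have c: "(1 / s K) *\<^sub>R x \<in> pset (W K) \<or> norm x \<le> s K * norm (bb K)"
            by (intro scale_A[OF x(1)])
          show "\<exists>b\<in>T. dist a b \<le> \<epsilon>"
          proof (cases "(1 / s K) *\<^sub>R x \<in> pset (W K)")
            case True
            then have "a \<in> pset (W K)" using x by simp
            moreover have "\<not> real (jj K) < norm a" using na elim jjK[of n] by (simp add: K_def)
            ultimately have "a \<in> good (LL K) (EE K)" using W_props(4)[of K] by auto
            moreover have "\<forall>x\<in>good (fst (snd (cT n))) (snd (snd (cT n))). \<exists>t\<in>T. dist x t \<le> 1 / real (n+1)"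
              using cT[of n] unfolding AP_def by blast
            ultimately obtain t where "t \<in> T" "dist a t \<le> 1 / real (n+1)"
              using goodK[of n] unfolding K_def by blast
            then show ?thesis using elim by (intro bexI[of _ t]) auto
          next
            case False
            then have "norm x \<le> s K * norm (bb K)" using c by blast
            then have "norm a \<le> norm (bb K)" using xa sK by simp
            also have "\<dots> \<le> 1 / real (jj K)" by (rule bb_le)
            also have "\<dots> \<le> \<epsilon>" using elim jjK[of n] by (simp add: K_def)
            finally have "dist a 0 \<le> \<epsilon>" by simp
            moreover have "0 \<in> T" using T by (simp add: CU_def)
            ultimately show ?thesis by blast
          qed
        qed
      qed
    qed
    show "(\<lambda>m. exc (T \<inter> cball 0 R) (Y m)) \<longlonglongrightarrow> 0"
    proof (rule tendsto_exc_0)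
      fix \<epsilon> :: real assume e: "\<epsilon> > 0"
      show "\<forall>\<^sub>F m in sequentially. \<forall>a\<in>T \<inter> cball 0 R. \<exists>b\<in>Y m. dist a b \<le> \<epsilon>"
        using evN[OF e]
      proof eventually_elim
        case (elim n)
        define K where "K = Kf n"
        show ?case
        proof
          fix t assume t: "t \<in> T \<inter> cball 0 R"
          then have tb: "t \<in> T \<inter> cball 0 (real (n+1))" using elim by auto
          have A: "\<forall>t\<in>T \<inter> cball 0 (real (n+1)). \<exists>x\<in>good (fst (snd (cT n))) (snd (snd (cT n))). dist t x \<le> 1 / real (n+1)"
            using cT[of n] unfolding AP_def by blast
          obtain x where x: "x \<in> good (LL K) (EE K)" "dist t x \<le> 1 / real (n+1)"
            using A tb goodK[of n] unfolding K_def by blast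
          have "x \<in> pset (W K)" using x(1) W_props(5)[of K] by auto
          then have "s K *\<^sub>R x \<in> X" using scale_B[of K] by auto
          moreover have "(1 / r n) *\<^sub>R (s K *\<^sub>R x - 0) = x" using s_pos[of K] by (simp add: r_def K_def)
          ultimately have "x \<in> Y n" unfolding Y_def by (metis image_eqI)
          then show "\<exists>b\<in>Y n. dist t b \<le> \<epsilon>" using x(2) elim by (intro bexI[of _ x]) auto
        qed
      qed
    qed
  qed
  have "closed T" "0 \<in> T" using T by (auto simp: CU_def)
  moreover have "\<exists>r. (\<forall>j. r j > 0) \<and> decseq r \<and> r \<longlonglongrightarrow> 0 \<and>
        AW_converges (\<lambda>j. (\<lambda>y. (1 / r j) *\<^sub>R (y - 0)) ` X) T"
    using rpos rdec r0 AW unfolding Y_def by blast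
  ultimately show ?thesis unfolding Tan_def by blast
qed

end

lemma main_generic:
  assumes dim: "2 \<le> DIM('a::euclidean_space)"
  shows "\<exists>f :: real \<Rightarrow> 'a. (\<exists>L::real. L-lipschitz_on {0..1} f) \<and> f 0 = 0 \<and> Tan (f ` {0..1}) 0 = CU"
proof -
  obtain D :: "'a set" where D: "countable D" "\<And>U. open U \<Longrightarrow> U \<noteq> {} \<Longrightarrow> \<exists>d\<in>D. d \<in> U"
    using countable_dense_exists by blast
  interpret constr D using dim D by unfold_locales auto
  obtain f :: "real \<Rightarrow> 'a" where f: "1-lipschitz_on {0..1} f" "f 0 = 0" "f ` {0..1} = X"
    using curve_exists by blast
  have conX: "connected X"
    unfolding f(3)[symmetric]
    by (intro connected_continuous_image lipschitz_on_continuous_on[OF f(1)]) simp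
  define q where "q = s 0 *\<^sub>R (rho 0 *\<^sub>R dir 0)"
  have qX: "q \<in> X" using scale_B[of 0] hdW_in[of 0] by (auto simp: q_def)
  have q0: "q \<noteq> 0" using s_pos[of 0] rho_pos[of 0] norm_dir[of 0] by (auto simp: q_def)
  have "Tan X 0 = CU" using tan_sub_CU[OF conX qX q0] CU_sub_Tan by blast
  then show ?thesis using f by (intro exI[where x=f]) auto
qed

theorem theoremA1:
  assumes "CARD('n::finite) \<ge> 2"
  shows "\<exists>f :: real \<Rightarrow> real ^ 'n. (\<exists>L::real. L-lipschitz_on {0..1} f) \<and> f 0 = 0 \<and>
           Tan (f ` {0..1}) 0 = CU"
proof -
  have "2 \<le> DIM(real ^ 'n)" using assms by simp
  then show ?thesis by (rule main_generic)
qed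

end
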